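(* Let $(H_X,H_Z)$ be a CSS code and let $\mathcal{C}'$ be a non-interleaved single-ancilla CNOT-based SEC for it with residual error set $\mathcal{E}$ and circuit distance $d'_{\mathrm{circ}}$. Then $d'_{\mathrm{circ}}\le d_{\mathrm{ext}}(\mathcal{R})$ for every $\mathcal{R}\subseteq\mathcal{E}$, and $d'_{\mathrm{circ}}=d_{\mathrm{ext}}(\mathcal{E})$.
   Context: A CSS code on $n$ data qubits is given by binary $H_X\in\mathbb{F}_2^{m\times n}$, $H_Z\in\mathbb{F}_2^{m'\times n}$ with $H_XH_Z^{\mathsf T}=0$; rows are $X$-type (resp. $Z$-type) checks. $L_X$ is a matrix whose rows are $X$-type logical operators spanning $\ker(H_Z)$ modulo $\operatorname{span}(H_X)$; $L_Z$ analogously with $X\leftrightarrow Z$. Single-ancilla CNOT-based SEC: each check has its own dedicated ancilla. For an $X$ check the ancilla is prepared in $|+\rangle$, CNOTs go from ancilla to each data qubit in its support, and it is measured in $X$; for a $Z$ check the ancilla is prepared in $|0\rangle$, CNOTs go from each data qubit in its support to the ancilla, and it is measured in $Z$. Operations take one time step, each qubit in at most one operation per step; repeated for several rounds. It is non-interleaved if either all $X$-type-check CNOTs precede all overlapping $Z$-type-check CNOTs (acting on common data qubits), or all $Z$-type-check CNOTs precede all overlapping $X$-type-check CNOTs. Noise and circuit distance: each operation fails independently; failed idles are followed by a Pauli $X$, $Y$ or $Z$; failed CNOTs by a non-identity two-qubit Pauli; failed preparations prepare the orthogonal state; failed measurements flip their outcome; each such event is an error mechanism. In an $X$-basis (resp.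 $Z$-basis) memory experiment (data prepared in the $|+\rangle$ (resp. $|0\rangle$) product state, several noisy rounds, then all data measured in that basis, giving a perfect final round), detectors are parities of outcomes deterministic without noise. $d^X_{\mathrm{circ}}$ (resp. $d^Z_{\mathrm{circ}}$) is the minimum number of error mechanisms flipping no detector but flipping a logical observable; the circuit distance is the minimum of the two. Residual errors: for a $Z$-check with support $i_1,\dots,i_w$ listed in CNOT order, residual errors are $E_l=\sum_{s=l}^w e_{i_s}$, $l=2,\dots,w$ ($Z$-type); $\mathcal{E}_Z$ is the disjoint union over $Z$ checks; $\mathcal{E}_X$ analogously from $X$ checks; $\mathcal{E}=\mathcal{E}_X\sqcup\mathcal{E}_Z$; subsets are $\mathcal{R}=\mathcal{R}_X\sqcup\mathcal{R}_Z$ with $\mathcal{R}_X\subseteq\mathcal{E}_X$, $\mathcal{R}_Z\subseteq\mathcal{E}_Z$. Extended code distance: for $\mathcal{R}_Z$, form $H_X^{\mathrm{ext}}$, $L_X^{\mathrm{ext}}$ by appending to $H_X$ and $L_X$, for each residual error in $\mathcal{R}_Z$, one column equal to the mod-2 sum of the columns indexed by its qubits; $d^Z_{\mathrm{ext}}(\mathcal{R}_Z)$ is the minimum Hamming weight of $x$ with $H_X^{\mathrm{ext}}x^{\mathsf T}=0$, $L_X^{\mathrm{ext}}x^{\mathsf T}\neq0$. $d^X_{\mathrm{ext}}$ analogously with $X\leftrightarrow Z$; $d_{\mathrm{ext}}(\mathcal{R})=\min(d^X_{\mathrm{ext}}(\mathcal{R}_X),d^Z_{\mathrm{ext}}(\mathcal{R}_Z))$.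 *)

theory Defs
  imports Main "HOL-Library.Extended_Nat"
begin

text \<open>Binary matrices are functions nat => nat => bool (row, column); only
  entries with row index below the row count and column index below nq matter.\<close>

record css =
  nq :: nat
  mx :: nat   hx :: "nat \<Rightarrow> nat \<Rightarrow> bool"   \<comment> \<open>H_X, mx x n\<close>
  mz :: nat   hz :: "nat \<Rightarrow> nat \<Rightarrow> bool"   \<comment> \<open>H_Z, mz x n\<close>
  kx :: nat   lx :: "nat \<Rightarrow> nat \<Rightarrow> bool"   \<comment> \<open>L_X, kx x n\<close>
  kz :: nat   lz :: "nat \<Rightarrow> nat \<Rightarrow> bool"   \<comment> \<open>L_Z, kz x n\<close>

definition css_code :: "css \<Rightarrow> bool" where
  "css_code C \<longleftrightarrow> (\<forall>i<mx C. \<forall>k<mz C. even (card {q. q < nq C \<and> hx C i q \<and> hz C k q}))"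

definition in_ker :: "(nat \<Rightarrow> nat \<Rightarrow> bool) \<Rightarrow> nat \<Rightarrow> nat \<Rightarrow> (nat \<Rightarrow> bool) \<Rightarrow> bool" where
  "in_ker H m n v \<longleftrightarrow> (\<forall>i<m. even (card {q. q < n \<and> H i q \<and> v q}))"

definition rowcomb :: "(nat \<Rightarrow> nat \<Rightarrow> bool) \<Rightarrow> nat set \<Rightarrow> nat \<Rightarrow> bool" where
  "rowcomb M S q \<longleftrightarrow> odd (card {i \<in> S. M i q})"

text \<open>Rows of L lie in ker(H') and span ker(H') modulo the row span of H.\<close>
definition logical_rows ::
  "nat \<Rightarrow> (nat \<Rightarrow> nat \<Rightarrow> bool) \<Rightarrow> nat \<Rightarrow> (nat \<Rightarrow> nat \<Rightarrow> bool) \<Rightarrow> nat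
     \<Rightarrow> (nat \<Rightarrow> nat \<Rightarrow> bool) \<Rightarrow> nat \<Rightarrow> bool" where
  "logical_rows n H m H' m' L k \<longleftrightarrow>
     (\<forall>l<k. in_ker H' m' n (L l)) \<and>
     (\<forall>v. in_ker H' m' n v \<longrightarrow>
        (\<exists>S \<subseteq> {..<k}. \<exists>T \<subseteq> {..<m}. \<forall>q<n. v q = (rowcomb L S q \<noteq> rowcomb H T q)))"

definition css_with_logicals :: "css \<Rightarrow> bool" where
  "css_with_logicals C \<longleftrightarrow> css_code C \<and>
     logical_rows (nq C) (hx C) (mx C) (hz C) (mz C) (lx C) (kx C) \<and>
     logical_rows (nq C) (hz C) (mz C) (hx C) (mx C) (lz C) (kz C)"

datatype chk = XC nat | ZC nat

fun isX :: "chk \<Rightarrow> bool" where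
  "isX (XC _) = True" | "isX (ZC _) = False"

definition checks :: "css \<Rightarrow> chk set" where
  "checks C = XC ` {..<mx C} \<union> ZC ` {..<mz C}"

fun supp :: "css \<Rightarrow> chk \<Rightarrow> nat set" where
  "supp C (XC i) = {q. q < nq C \<and> hx C i q}"
| "supp C (ZC k) = {q. q < nq C \<and> hz C k q}"

datatype qubit = Data nat | Anc chk

datatype meas = MAnc nat chk  \<comment> \<open>ancilla outcome of check c in round r\<close>
              | MData nat

text \<open>A single-ancilla SEC round of length per: each check c has its ancilla prepared at
  time prepT c, the CNOT with data qubit q at time cnT c q, and is measured at measT c.\<close>
record sched =
  per :: nat
  prepT :: "chk \<Rightarrow> nat"
  measT :: "chk \<Rightarrow> nat"
  cnT :: "chk \<Rightarrow> nat \<Rightarrow> nat"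

definition valid_sec :: "css \<Rightarrow> sched \<Rightarrow> bool" where
  "valid_sec C S \<longleftrightarrow>
     (\<forall>c \<in> checks C. prepT S c < measT S c \<and> measT S c < per S \<and>
        (\<forall>q \<in> supp C c. prepT S c < cnT S c q \<and> cnT S c q < measT S c) \<and>
        inj_on (cnT S c) (supp C c)) \<and>
     (\<forall>q c1 c2. c1 \<in> checks C \<longrightarrow> c2 \<in> checks C \<longrightarrow> c1 \<noteq> c2 \<longrightarrow>
        q \<in> supp C c1 \<longrightarrow> q \<in> supp C c2 \<longrightarrow> cnT S c1 q \<noteq> cnT S c2 q)"

definition non_interleaved :: "css \<Rightarrow> sched \<Rightarrow> bool" where
  "non_interleaved C S \<longleftrightarrow>
     (\<forall>i<mx C. \<forall>k<mz C. \<forall>q \<in> supp C (XC i) \<inter> supp C (ZC k).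
         cnT S (XC i) q < cnT S (ZC k) q) \<or>
     (\<forall>i<mx C. \<forall>k<mz C. \<forall>q \<in> supp C (XC i) \<inter> supp C (ZC k).
         cnT S (ZC k) q < cnT S (XC i) q)"

datatype op = PrepZ qubit | PrepX qubit | MeasZ qubit meas | MeasX qubit meas
            | CNOT qubit qubit  \<comment> \<open>control, target\<close>
            | Idle qubit

type_synonym layer = "op set"
type_synonym frame = "(qubit \<Rightarrow> bool) \<times> (qubit \<Rightarrow> bool)"  \<comment> \<open>X part, Z part\<close>

definition reset :: "layer \<Rightarrow> qubit \<Rightarrow> bool" where
  "reset L u \<longleftrightarrow> PrepZ u \<in> L \<or> PrepX u \<in> L"

text \<open>Conjugation of a Pauli frame through one layer (operations of a layer act on
  disjoint qubits).\<close>
definition layer_apply :: "layer \<Rightarrow> frame \<Rightarrow> frame" where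
  "layer_apply L F =
     ((\<lambda>u. \<not> reset L u \<and> (fst F u \<noteq> odd (card {a. CNOT a u \<in> L \<and> fst F a}))),
      (\<lambda>u. \<not> reset L u \<and> (snd F u \<noteq> odd (card {b. CNOT u b \<in> L \<and> snd F b}))))"

text \<open>Which measurement outcomes of the layer are flipped by a frame present before it.\<close>
definition layer_flips :: "layer \<Rightarrow> frame \<Rightarrow> meas \<Rightarrow> bool" where
  "layer_flips L F m \<longleftrightarrow>
     odd (card {u. MeasZ u m \<in> L \<and> fst F u} + card {u. MeasX u m \<in> L \<and> snd F u})"

fun propagate :: "(nat \<Rightarrow> layer) \<Rightarrow> nat \<Rightarrow> nat \<Rightarrow> frame \<Rightarrow> meas \<Rightarrow> bool" where
  "propagate Ls g 0 F = (\<lambda>m. False)"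
| "propagate Ls g (Suc k) F =
     (\<lambda>m. layer_flips (Ls g) F m \<noteq> propagate Ls (Suc g) k (layer_apply (Ls g) F) m)"

datatype fkind = PauliF "qubit set" "qubit set"  \<comment> \<open>X support, Z support\<close>
               | FlipF

type_synonym mech = "nat \<times> op \<times> fkind"   \<comment> \<open>layer, failing operation, fault\<close>

fun fault_ok :: "op \<Rightarrow> fkind \<Rightarrow> bool" where
  "fault_ok (Idle u) e = (\<exists>X Z. e = PauliF X Z \<and> X \<subseteq> {u} \<and> Z \<subseteq> {u} \<and> X \<union> Z \<noteq> {})"
| "fault_ok (CNOT a b) e = (\<exists>X Z. e = PauliF X Z \<and> X \<subseteq> {a, b} \<and> Z \<subseteq> {a, b} \<and> X \<union> Z \<noteq> {})"
| "fault_ok (PrepZ u) e = (e = PauliF {u} {})"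
| "fault_ok (PrepX u) e = (e = PauliF {} {u})"
| "fault_ok (MeasZ u m) e = (e = FlipF)"
| "fault_ok (MeasX u m) e = (e = FlipF)"

definition mechs :: "(nat \<Rightarrow> layer) \<Rightarrow> nat \<Rightarrow> mech set" where
  "mechs Ls N = {(g, p, e). g < N \<and> p \<in> Ls g \<and> fault_ok p e}"

fun meas_label :: "op \<Rightarrow> meas option" where
  "meas_label (MeasZ u m) = Some m"
| "meas_label (MeasX u m) = Some m"
| "meas_label _ = None"

fun mech_effect :: "(nat \<Rightarrow> layer) \<Rightarrow> nat \<Rightarrow> mech \<Rightarrow> meas \<Rightarrow> bool" where
  "mech_effect Ls N (g, p, PauliF X Z) =
     propagate Ls (Suc g) (N - Suc g) ((\<lambda>u. u \<in> X), (\<lambda>u. u \<in> Z))"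
| "mech_effect Ls N (g, p, FlipF) = (\<lambda>m. meas_label p = Some m)"

definition total_flips :: "(nat \<Rightarrow> layer) \<Rightarrow> nat \<Rightarrow> mech set \<Rightarrow> meas \<Rightarrow> bool" where
  "total_flips Ls N F m \<longleftrightarrow> odd (card {f \<in> F. mech_effect Ls N f m})"

text \<open>Each operation fails at
  most once, hence mechanisms in a fault set have distinct locations.\<close>
definition circuit_distance ::
  "(nat \<Rightarrow> layer) \<Rightarrow> nat \<Rightarrow> meas set set \<Rightarrow> meas set set \<Rightarrow> enat" where
  "circuit_distance Ls N Ds Obs =
     Inf ((\<lambda>F. enat (card F)) `
       {F. finite F \<and> F \<subseteq> mechs Ls N \<and> inj_on (\<lambda>(g, p, e). (g, p)) F \<and>
           (\<forall>D \<in> Ds. even (card {m \<in> D. total_flips Ls N F m})) \<and>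
           (\<exists>Ob \<in> Obs. odd (card {m \<in> Ob. total_flips Ls N F m}))})"

datatype basis = BX | BZ

definition round_layer :: "css \<Rightarrow> sched \<Rightarrow> nat \<Rightarrow> nat \<Rightarrow> layer" where
  "round_layer C S r t =
     {PrepX (Anc c) | c. c \<in> checks C \<and> isX c \<and> prepT S c = t} \<union>
     {PrepZ (Anc c) | c. c \<in> checks C \<and> \<not> isX c \<and> prepT S c = t} \<union>
     {MeasX (Anc c) (MAnc r c) | c. c \<in> checks C \<and> isX c \<and> measT S c = t} \<union>
     {MeasZ (Anc c) (MAnc r c) | c. c \<in> checks C \<and> \<not> isX c \<and> measT S c = t} \<union>
     {CNOT (Anc c) (Data q) | c q. c \<in> checks C \<and> isX c \<and> q \<in> supp C c \<and> cnT S c q = t} \<union>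
     {CNOT (Data q) (Anc c) | c q. c \<in> checks C \<and> \<not> isX c \<and> q \<in> supp C c \<and> cnT S c q = t} \<union>
     {Idle (Anc c) | c. c \<in> checks C \<and> t \<noteq> prepT S c \<and> t \<noteq> measT S c \<and>
                          t \<notin> cnT S c ` supp C c} \<union>
     {Idle (Data q) | q. q < nq C \<and> (\<forall>c \<in> checks C. q \<in> supp C c \<longrightarrow> cnT S c q \<noteq> t)}"

definition anc_idle :: "css \<Rightarrow> layer" where
  "anc_idle C = {Idle (Anc c) | c. c \<in> checks C}"

text \<open>Memory experiment in basis b with R noisy rounds: layer 0 prepares all data qubits,
  layers 1 .. R*per are the rounds, layer R*per+1 measures all data qubits.\<close>
definition mem_layer :: "css \<Rightarrow> sched \<Rightarrow> basis \<Rightarrow> nat \<Rightarrow> nat \<Rightarrow> layer" where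
  "mem_layer C S b R g =
     (if g = 0 then
        {(if b = BX then PrepX (Data q) else PrepZ (Data q)) | q. q < nq C} \<union> anc_idle C
      else if g = Suc (R * per S) then
        {(if b = BX then MeasX (Data q) (MData q) else MeasZ (Data q) (MData q)) | q. q < nq C}
          \<union> anc_idle C
      else if g \<le> R * per S then round_layer C S ((g - 1) div per S) ((g - 1) mod per S)
      else {})"

definition mem_len :: "sched \<Rightarrow> nat \<Rightarrow> nat" where
  "mem_len S R = R * per S + 2"

fun own :: "basis \<Rightarrow> nat \<Rightarrow> chk" where
  "own BX i = XC i" | "own BZ i = ZC i"

fun nown :: "css \<Rightarrow> basis \<Rightarrow> nat" where
  "nown C BX = mx C" | "nown C BZ = mz C"

definition detectors :: "css \<Rightarrow> basis \<Rightarrow> nat \<Rightarrow> meas set set" where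
  "detectors C b R =
     {{MAnc 0 (own b i)} | i. i < nown C b} \<union>
     {{MAnc (r - 1) c, MAnc r c} | r c. 1 \<le> r \<and> r < R \<and> c \<in> checks C} \<union>
     {insert (MAnc (R - 1) (own b i)) (MData ` supp C (own b i)) | i. i < nown C b}"

fun observables :: "css \<Rightarrow> basis \<Rightarrow> meas set set" where
  "observables C BX = {MData ` {q. q < nq C \<and> lx C l q} | l. l < kx C}"
| "observables C BZ = {MData ` {q. q < nq C \<and> lz C l q} | l. l < kz C}"

definition circ_dist_basis :: "css \<Rightarrow> sched \<Rightarrow> nat \<Rightarrow> basis \<Rightarrow> enat" where
  "circ_dist_basis C S R b =
     circuit_distance (mem_layer C S b R) (mem_len S R) (detectors C b R) (observables C b)"

definition circ_dist :: "css \<Rightarrow> sched \<Rightarrow> nat \<Rightarrow> enat" where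
  "circ_dist C S R = min (circ_dist_basis C S R BX) (circ_dist_basis C S R BZ)"

text \<open>Residual error E_l of check c is indexed by (c, q) with q = i_l (l \<ge> 2, i.e. q not
  the first qubit of c in CNOT order); its support is {i_s. s \<ge> l}.\<close>
definition resid_idx :: "css \<Rightarrow> sched \<Rightarrow> bool \<Rightarrow> (chk \<times> nat) set" where
  "resid_idx C S xtype =
     {(c, q). c \<in> checks C \<and> isX c = xtype \<and> q \<in> supp C c \<and>
              (\<exists>q' \<in> supp C c. cnT S c q' < cnT S c q)}"

definition resid_set :: "css \<Rightarrow> sched \<Rightarrow> chk \<times> nat \<Rightarrow> nat set" where
  "resid_set C S r = {q' \<in> supp C (fst r). cnT S (fst r) (snd r) \<le> cnT S (fst r) q'}"

fun ext_col :: "(nat \<Rightarrow> nat \<Rightarrow> bool) \<Rightarrow> ('r \<Rightarrow> nat set) \<Rightarrow> nat \<Rightarrow> nat + 'r \<Rightarrow> bool" where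
  "ext_col H E i (Inl q) = H i q"
| "ext_col H E i (Inr r) = odd (card {q \<in> E r. H i q})"

text \<open>x is identified with its support, a set of columns of the extended matrices.\<close>
definition ext_dist ::
  "nat \<Rightarrow> (nat \<Rightarrow> nat \<Rightarrow> bool) \<Rightarrow> nat \<Rightarrow> (nat \<Rightarrow> nat \<Rightarrow> bool) \<Rightarrow> nat
     \<Rightarrow> ('r \<Rightarrow> nat set) \<Rightarrow> 'r set \<Rightarrow> enat" where
  "ext_dist n H m L k E R =
     Inf ((\<lambda>X. enat (card X)) `
       {X. finite X \<and> X \<subseteq> Inl ` {..<n} \<union> Inr ` R \<and>
           (\<forall>i<m. even (card {c \<in> X. ext_col H E i c})) \<and>
           (\<exists>l<k. odd (card {c \<in> X. ext_col L E l c}))})"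

definition ext_dist_Z :: "css \<Rightarrow> sched \<Rightarrow> (chk \<times> nat) set \<Rightarrow> enat" where
  "ext_dist_Z C S RZ = ext_dist (nq C) (hx C) (mx C) (lx C) (kx C) (resid_set C S) RZ"

definition ext_dist_X :: "css \<Rightarrow> sched \<Rightarrow> (chk \<times> nat) set \<Rightarrow> enat" where
  "ext_dist_X C S RX = ext_dist (nq C) (hz C) (mz C) (lz C) (kz C) (resid_set C S) RX"

definition d_ext :: "css \<Rightarrow> sched \<Rightarrow> (chk \<times> nat) set \<Rightarrow> (chk \<times> nat) set \<Rightarrow> enat" where
  "d_ext C S RX RZ = min (ext_dist_X C S RX) (ext_dist_Z C S RZ)"

end

theory Submission
  imports Defs
begin

definition par :: "'a set \<Rightarrow> bool" where "par A \<longleftrightarrow> odd (card A)"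

lemma par_empty[simp]: "par {} = False" by (simp add: par_def)

lemma par_insert: "finite A \<Longrightarrow> x \<notin> A \<Longrightarrow> par (insert x A) = (\<not> par A)"
  by (simp add: par_def)

lemma par_Un: "finite A \<Longrightarrow> finite B \<Longrightarrow> A \<inter> B = {} \<Longrightarrow> par (A \<union> B) = (par A \<noteq> par B)"
  by (simp add: par_def card_Un_disjoint)

lemma par_image: "inj_on f A \<Longrightarrow> par (f ` A) = par A"
  by (simp add: par_def card_image)

lemma par_xor: "finite A \<Longrightarrow> par {x\<in>A. P x \<noteq> Q x} = (par {x\<in>A. P x} \<noteq> par {x\<in>A. Q x})"
proof (induction A rule: finite_induct)
  case empty then show ?case by simp
next
  case (insert a A)
  have e: "\<And>R. {x \<in> insert a A. R x} = (if R a then insert a {x\<in>A. R x} else {x\<in>A. R x})" by auto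
  show ?case using insert by (subst (1 2 3) e) (auto simp: par_insert)
qed

lemma par_sigma: "finite A \<Longrightarrow> (\<forall>x\<in>A. finite (B x)) \<Longrightarrow>
   par (SIGMA x:A. B x) = par {x\<in>A. par (B x)}"
proof (induction A rule: finite_induct)
  case empty then show ?case by simp
next
  case (insert a A)
  have s: "(SIGMA x:insert a A. B x) = ({a} \<times> B a) \<union> (SIGMA x:A. B x)" by auto
  have d: "({a} \<times> B a) \<inter> (SIGMA x:A. B x) = {}" using insert by auto
  have c: "par ({a} \<times> B a) = par (B a)" by (simp add: par_def card_cartesian_product)
  have e: "{x \<in> insert a A. par (B x)} = (if par (B a) then insert a {x\<in>A. par (B x)} else {x\<in>A. par (B x)})" by auto
  have "par (SIGMA x:insert a A. B x) = (par (B a) \<noteq> par (SIGMA x:A. B x))"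
    using insert by (simp add: s par_Un d c finite_SigmaI)
  then show ?case using insert by (subst e) (simp add: par_insert)
qed

lemma par_cong: "A = B \<Longrightarrow> par A = par B" by simp

lemma checks_X[simp]: "XC i \<in> checks C \<longleftrightarrow> i < mx C" by (auto simp: checks_def)
lemma checks_Z[simp]: "ZC k \<in> checks C \<longleftrightarrow> k < mz C" by (auto simp: checks_def)

lemma rl_CNOT: "CNOT a b \<in> round_layer C S r t \<longleftrightarrow>
  (\<exists>i q. a = Anc (XC i) \<and> b = Data q \<and> i < mx C \<and> q \<in> supp C (XC i) \<and> cnT S (XC i) q = t) \<or>
  (\<exists>k q. a = Data q \<and> b = Anc (ZC k) \<and> k < mz C \<and> q \<in> supp C (ZC k) \<and> cnT S (ZC k) q = t)"
  apply (simp add: round_layer_def)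
  apply (rule iffI)
   apply (elim disjE exE conjE)
    apply (case_tac c; force)
   apply (case_tac c; force)
  apply (elim disjE exE conjE)
   apply (rule disjI1, rule_tac x="XC i" in exI, force)
  apply (rule disjI2, rule_tac x="ZC k" in exI, force)
  done

lemma rl_PrepZ: "PrepZ u \<in> round_layer C S r t \<longleftrightarrow> (\<exists>k. u = Anc (ZC k) \<and> k < mz C \<and> prepT S (ZC k) = t)"
  apply (simp add: round_layer_def)
  apply (rule iffI)
   apply (elim exE conjE, case_tac c; force)
  apply force
  done

lemma rl_PrepX: "PrepX u \<in> round_layer C S r t \<longleftrightarrow> (\<exists>i. u = Anc (XC i) \<and> i < mx C \<and> prepT S (XC i) = t)"
  apply (simp add: round_layer_def)
  apply (rule iffI)
   apply (elim exE conjE, case_tac c; force)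
  apply force
  done

lemma rl_MeasX: "MeasX u m \<in> round_layer C S r t \<longleftrightarrow> (\<exists>i. u = Anc (XC i) \<and> m = MAnc r (XC i) \<and> i < mx C \<and> measT S (XC i) = t)"
  apply (simp add: round_layer_def)
  apply (rule iffI)
   apply (elim exE conjE, case_tac c; force)
  apply force
  done

lemma rl_MeasZ: "MeasZ u m \<in> round_layer C S r t \<longleftrightarrow> (\<exists>k. u = Anc (ZC k) \<and> m = MAnc r (ZC k) \<and> k < mz C \<and> measT S (ZC k) = t)"
  apply (simp add: round_layer_def)
  apply (rule iffI)
   apply (elim exE conjE, case_tac c; force)
  apply force
  done

lemma rl_reset_Data[simp]: "\<not> reset (round_layer C S r t) (Data q)"
  by (simp add: reset_def rl_PrepZ rl_PrepX)

lemma rl_reset_AncZ: "reset (round_layer C S r t) (Anc (ZC k)) \<longleftrightarrow> k < mz C \<and> prepT S (ZC k) = t"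
  by (simp add: reset_def rl_PrepZ rl_PrepX)

lemma rl_reset_AncX: "reset (round_layer C S r t) (Anc (XC i)) \<longleftrightarrow> i < mx C \<and> prepT S (XC i) = t"
  by (simp add: reset_def rl_PrepZ rl_PrepX)

lemma rl_ctrl_Data: "{b. CNOT (Data q) b \<in> round_layer C S r t \<and> Z b} =
   (\<lambda>k. Anc (ZC k)) ` {k. k < mz C \<and> q \<in> supp C (ZC k) \<and> cnT S (ZC k) q = t \<and> Z (Anc (ZC k))}"
  by (auto simp: rl_CNOT)

lemma rl_ctrl_AncZ: "{b. CNOT (Anc (ZC k)) b \<in> round_layer C S r t \<and> Z b} = {}"
  by (auto simp: rl_CNOT)

lemma rl_ctrl_AncX: "{b. CNOT (Anc (XC i)) b \<in> round_layer C S r t \<and> Z b} =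
   Data ` {q \<in> supp C (XC i). i < mx C \<and> cnT S (XC i) q = t \<and> Z (Data q)}"
  by (auto simp: rl_CNOT)

lemma rl_trg_Data: "{a. CNOT a (Data q) \<in> round_layer C S r t \<and> X a} =
   (\<lambda>i. Anc (XC i)) ` {i. i < mx C \<and> q \<in> supp C (XC i) \<and> cnT S (XC i) q = t \<and> X (Anc (XC i))}"
  by (auto simp: rl_CNOT)

lemma rl_trg_AncX: "{a. CNOT a (Anc (XC i)) \<in> round_layer C S r t \<and> X a} = {}"
  by (auto simp: rl_CNOT)

lemma rl_trg_AncZ: "{a. CNOT a (Anc (ZC k)) \<in> round_layer C S r t \<and> X a} =
   Data ` {q \<in> supp C (ZC k). k < mz C \<and> cnT S (ZC k) q = t \<and> X (Data q)}"
  by (auto simp: rl_CNOT)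

lemma prop_labels: "propagate Ls g n F m \<Longrightarrow>
   \<exists>g'. g \<le> g' \<and> g' < g + n \<and> (\<exists>u. MeasZ u m \<in> Ls g' \<or> MeasX u m \<in> Ls g')"
proof (induction n arbitrary: g F)
  case 0 then show ?case by simp
next
  case (Suc n)
  show ?case
  proof (cases "layer_flips (Ls g) F m")
    case True
    then have "{u. MeasZ u m \<in> Ls g \<and> fst F u} \<noteq> {} \<or> {u. MeasX u m \<in> Ls g \<and> snd F u} \<noteq> {}"
      unfolding layer_flips_def by (auto simp del: Collect_empty_eq)
    then show ?thesis by (intro exI[of _ g]) auto
  next
    case False
    then have "propagate Ls (Suc g) n (layer_apply (Ls g) F) m" using Suc.prems by simp
    from Suc.IH[OF this] obtain g' where "Suc g \<le> g'" "g' < Suc g + n"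
       "\<exists>u. MeasZ u m \<in> Ls g' \<or> MeasX u m \<in> Ls g'" by blast
    then show ?thesis by (intro exI[of _ g']) auto
  qed
qed

locale memx =
  fixes C :: css and S :: sched and R :: nat
  assumes valid: "valid_sec C S" and R1: "1 \<le> R"
begin

abbreviation "P \<equiv> per S"
abbreviation "Ls \<equiv> mem_layer C S BX R"
abbreviation "N \<equiv> mem_len S R"

lemma N_eq: "N = R * P + 2" by (simp add: mem_len_def)

lemma vc: "c \<in> checks C \<Longrightarrow> prepT S c < measT S c \<and> measT S c < P"
  using valid by (auto simp: valid_sec_def)
lemma vcq: "c \<in> checks C \<Longrightarrow> q \<in> supp C c \<Longrightarrow> prepT S c < cnT S c q \<and> cnT S c q < measT S c"
  using valid by (auto simp: valid_sec_def)
lemma vinj: "c \<in> checks C \<Longrightarrow> inj_on (cnT S c) (supp C c)"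
  using valid by (auto simp: valid_sec_def)

lemma Ls_round: assumes "r < R" "t < P" shows "Ls (Suc (r*P + t)) = round_layer C S r t"
proof -
  have "r * P + t < R * P"
  proof -
    have "r * P + t < r * P + P" using assms by simp
    also have "\<dots> = Suc r * P" by simp
    also have "\<dots> \<le> R * P" using assms by (intro mult_right_mono) auto
    finally show ?thesis .
  qed
  moreover have "(r * P + t) div P = r" "(r*P + t) mod P = t" using assms by auto
  ultimately show ?thesis by (simp add: mem_layer_def)
qed

lemma Ls_final: "Ls (Suc (R*P)) = {MeasX (Data q) (MData q) | q. q < nq C} \<union> anc_idle C"
  by (simp add: mem_layer_def)

lemma Ls_zero: "Ls 0 = {PrepX (Data q) | q. q < nq C} \<union> anc_idle C"
  by (simp add: mem_layer_def)

lemma g_decomp: assumes "1 \<le> g" "g \<le> R * P"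
  obtains r t where "g = Suc (r*P + t)" "r < R" "t < P"
proof -
  have P0: "P > 0" using assms by (cases "P = 0") auto
  let ?r = "(g-1) div P" and ?t = "(g-1) mod P"
  have "g = Suc (?r * P + ?t)" using assms by simp
  moreover have "?t < P" using P0 by simp
  moreover have "?r < R"
  proof (rule ccontr)
    assume "\<not> ?r < R"
    then have "R * P \<le> ?r * P" by simp
    also have "\<dots> \<le> g - 1" by simp
    finally show False using assms by simp
  qed
  ultimately show ?thesis using that by blast
qed

lemma anc_idle_meas: "MeasX u m \<notin> anc_idle C" "MeasZ u m \<notin> anc_idle C"
  by (auto simp: anc_idle_def)

lemma label_MAnc: assumes "MeasZ u (MAnc r c) \<in> Ls g \<or> MeasX u (MAnc r c) \<in> Ls g"
  shows "g = Suc (r * P + measT S c) \<and> r < R \<and> c \<in> checks C"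
proof -
  have g0: "g \<noteq> 0"
  proof
    assume "g = 0"
    with assms have "MeasZ u (MAnc r c) \<in> Ls 0 \<or> MeasX u (MAnc r c) \<in> Ls 0" by simp
    then show False unfolding Ls_zero using anc_idle_meas by blast
  qed
  have gf: "g \<noteq> Suc (R*P)"
  proof
    assume "g = Suc (R*P)"
    with assms have "MeasZ u (MAnc r c) \<in> Ls (Suc (R*P)) \<or> MeasX u (MAnc r c) \<in> Ls (Suc (R*P))" by simp
    then show False unfolding Ls_final using anc_idle_meas by blast
  qed
  have gl: "g \<le> R * P"
  proof (rule ccontr)
    assume "\<not> g \<le> R*P" with g0 gf have "Ls g = {}" by (simp add: mem_layer_def)
    with assms show False by simp
  qed
  have g1: "1 \<le> g" using g0 by simp
  obtain r' t where rt: "g = Suc (r'*P + t)" "r' < R" "t < P" using g_decomp[OF g1 gl] by blast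
  have "Ls g = round_layer C S r' t" using rt Ls_round by simp
  then have "MeasZ u (MAnc r c) \<in> round_layer C S r' t \<or> MeasX u (MAnc r c) \<in> round_layer C S r' t"
    using assms by simp
  then have "r' = r \<and> measT S c = t \<and> c \<in> checks C" unfolding rl_MeasX rl_MeasZ by auto
  then show ?thesis using rt by simp
qed

lemma no_flip_MAnc: assumes "g > Suc (r * P + measT S c)"
  shows "\<not> propagate Ls g n F (MAnc r c)"
proof
  assume "propagate Ls g n F (MAnc r c)"
  from prop_labels[OF this] obtain g' u where "g \<le> g'" "MeasZ u (MAnc r c) \<in> Ls g' \<or> MeasX u (MAnc r c) \<in> Ls g'" by blast
  then have "g' = Suc (r * P + measT S c)" using label_MAnc by blast
  with \<open>g \<le> g'\<close> assms show False by linarith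
qed

end

lemma rl_flips_MData: "layer_flips (round_layer C S r t) F (MData q) = False"
  by (simp add: layer_flips_def rl_MeasX rl_MeasZ)

lemma snd_apply: "snd (layer_apply L F) u = (\<not> reset L u \<and> (snd F u \<noteq> par {b. CNOT u b \<in> L \<and> snd F b}))"
  by (simp add: layer_apply_def par_def)

lemma fst_apply: "fst (layer_apply L F) u = (\<not> reset L u \<and> (fst F u \<noteq> par {a. CNOT a u \<in> L \<and> fst F a}))"
  by (simp add: layer_apply_def par_def)

lemma flips_par: "layer_flips L F m = (par {u. MeasZ u m \<in> L \<and> fst F u} \<noteq> par {u. MeasX u m \<in> L \<and> snd F u})"
  by (simp add: layer_flips_def par_def)

declare supp.simps[simp del]

lemma apZ_Data: "snd (layer_apply (round_layer C S r t) F) (Data q) =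
  (snd F (Data q) \<noteq> par {k. k < mz C \<and> q \<in> supp C (ZC k) \<and> cnT S (ZC k) q = t \<and> snd F (Anc (ZC k))})"
proof -
  have "par {b. CNOT (Data q) b \<in> round_layer C S r t \<and> snd F b} =
        par {k. k < mz C \<and> q \<in> supp C (ZC k) \<and> cnT S (ZC k) q = t \<and> snd F (Anc (ZC k))}"
    unfolding rl_ctrl_Data by (rule par_image) (auto simp: inj_on_def)
  then show ?thesis by (simp add: snd_apply)
qed

lemma apZ_AncZ: "snd (layer_apply (round_layer C S r t) F) (Anc (ZC k)) =
  (\<not> (k < mz C \<and> prepT S (ZC k) = t) \<and> snd F (Anc (ZC k)))"
  by (simp add: snd_apply rl_ctrl_AncZ rl_reset_AncZ)

lemma apZ_AncX: "snd (layer_apply (round_layer C S r t) F) (Anc (XC i)) =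
  (\<not> (i < mx C \<and> prepT S (XC i) = t) \<and>
    (snd F (Anc (XC i)) \<noteq> par {q \<in> supp C (XC i). i < mx C \<and> cnT S (XC i) q = t \<and> snd F (Data q)}))"
proof -
  have "par {b. CNOT (Anc (XC i)) b \<in> round_layer C S r t \<and> snd F b} =
        par {q \<in> supp C (XC i). i < mx C \<and> cnT S (XC i) q = t \<and> snd F (Data q)}"
    unfolding rl_ctrl_AncX by (rule par_image) (auto simp: inj_on_def)
  then show ?thesis by (simp add: snd_apply rl_reset_AncX)
qed

lemma apX_empty: "fst F = (\<lambda>_. False) \<Longrightarrow> fst (layer_apply L F) = (\<lambda>_. False)"
  by (simp add: layer_apply_def)

context memx begin

lemma rt_bound: "r < R \<Longrightarrow> t < P \<Longrightarrow> r * P + t < R * P"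
proof -
  assume a: "r < R" "t < P"
  have "r * P + t < r * P + P" using a by simp
  also have "\<dots> = Suc r * P" by simp
  also have "\<dots> \<le> R * P" using a by (intro mult_right_mono) auto
  finally show ?thesis .
qed

definition pend :: "nat \<Rightarrow> nat \<Rightarrow> nat \<Rightarrow> bool" where
  "pend g k q \<longleftrightarrow> 1 \<le> g \<and> g \<le> R*P \<and> prepT S (ZC k) < (g-1) mod P \<and> (g-1) mod P \<le> cnT S (ZC k) q"

definition Wf :: "nat \<Rightarrow> (qubit \<Rightarrow> bool) \<Rightarrow> nat \<Rightarrow> bool" where
  "Wf g Z q \<longleftrightarrow> (Z (Data q) \<noteq> par {k. k < mz C \<and> q \<in> supp C (ZC k) \<and> Z (Anc (ZC k)) \<and> pend g k q})"

lemma pend_round: "r < R \<Longrightarrow> t < P \<Longrightarrow> pend (Suc (r*P+t)) k q \<longleftrightarrow> prepT S (ZC k) < t \<and> t \<le> cnT S (ZC k) q"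
proof -
  assume a: "r < R" "t < P"
  have m: "(Suc (r*P+t) - 1) mod P = t" using a by simp
  have b: "Suc (r*P+t) \<le> R*P" using rt_bound[OF a] by simp
  show ?thesis unfolding pend_def m using b by simp
qed

lemma pend_final: "\<not> pend (Suc (R*P)) k q" by (simp add: pend_def)

lemma pend_next: assumes "r < R" "t < P" "k < mz C" "q \<in> supp C (ZC k)"
  shows "pend (Suc (Suc (r*P+t))) k q \<longleftrightarrow> prepT S (ZC k) < Suc t \<and> Suc t \<le> cnT S (ZC k) q"
proof (cases "Suc t < P")
  case True
  then show ?thesis using pend_round[of r "Suc t" k q] assms by simp
next
  case False
  then have tP: "Suc t = P" using assms by simp
  have "cnT S (ZC k) q < P" using vcq[of "ZC k" q] vc[of "ZC k"] assms by auto
  then have r: "\<not> (Suc t \<le> cnT S (ZC k) q)" using tP by simp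
  have "\<not> pend (Suc (Suc (r*P+t))) k q"
  proof (cases "Suc r < R")
    case True
    have e: "Suc (Suc (r*P+t)) = Suc (Suc r * P + 0)" using tP by simp
    show ?thesis unfolding e using pend_round[of "Suc r" 0 k q] True tP by simp
  next
    case False
    then have "Suc r = R" using assms by simp
    then have RP: "R * P = P + r * P" by (metis mult_Suc)
    have "Suc (Suc (r*P+t)) = Suc (P + r*P)" using tP by simp
    then have e: "Suc (Suc (r*P+t)) = Suc (R*P)" using RP by simp
    show ?thesis unfolding e by (rule pend_final)
  qed
  then show ?thesis using r by simp
qed

lemma W_step: assumes "r < R" "t < P"
  shows "Wf (Suc (r*P+t)) Z q = Wf (Suc (Suc (r*P+t))) (snd (layer_apply (round_layer C S r t) (X, Z))) q"
proof -
  let ?Z' = "snd (layer_apply (round_layer C S r t) (X, Z))"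
  let ?K = "{k. k < mz C \<and> q \<in> supp C (ZC k) \<and> cnT S (ZC k) q = t \<and> Z (Anc (ZC k))}"
  let ?B = "{k. k < mz C \<and> q \<in> supp C (ZC k) \<and> ?Z' (Anc (ZC k)) \<and> pend (Suc (Suc (r*P+t))) k q}"
  let ?A = "{k. k < mz C \<and> q \<in> supp C (ZC k) \<and> Z (Anc (ZC k)) \<and> pend (Suc (r*P+t)) k q}"
  have AKB: "?A = ?K \<union> ?B"
  proof (intro set_eqI iffI)
    fix k assume "k \<in> ?A"
    then have k: "k < mz C" "q \<in> supp C (ZC k)" "Z (Anc (ZC k))" "prepT S (ZC k) < t" "t \<le> cnT S (ZC k) q"
      using pend_round assms by auto
    show "k \<in> ?K \<union> ?B"
      using k assms by (cases "cnT S (ZC k) q = t") (auto simp: apZ_AncZ pend_next)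
  next
    fix k assume "k \<in> ?K \<union> ?B"
    then show "k \<in> ?A"
    proof
      assume "k \<in> ?K" then show ?thesis using vcq[of "ZC k" q] assms by (auto simp: pend_round)
    next
      assume "k \<in> ?B" then show ?thesis using assms by (auto simp: apZ_AncZ pend_next pend_round)
    qed
  qed
  have disj: "?K \<inter> ?B = {}" using assms by (auto simp: pend_next)
  have fin: "finite ?K" "finite ?B" by auto
  have "Wf (Suc (r*P+t)) Z q = (Z (Data q) \<noteq> (par ?K \<noteq> par ?B))"
    unfolding Wf_def AKB par_Un[OF fin disj] by simp
  also have "\<dots> = Wf (Suc (Suc (r*P+t))) ?Z' q"
    unfolding Wf_def apZ_Data by auto
  finally show ?thesis .
qed

lemma final_flips_MData: "q < nq C \<Longrightarrow> layer_flips (Ls (Suc (R*P))) F (MData q) = snd F (Data q)"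
proof -
  assume q: "q < nq C"
  have e1: "{u. MeasZ u (MData q) \<in> Ls (Suc (R*P)) \<and> fst F u} = {}"
    unfolding Ls_final using anc_idle_meas by auto
  have e2: "{u. MeasX u (MData q) \<in> Ls (Suc (R*P)) \<and> snd F u} = (if snd F (Data q) then {Data q} else {})"
    unfolding Ls_final using anc_idle_meas q by auto
  show ?thesis unfolding layer_flips_def e1 e2 by simp
qed

lemma W_aux: "\<forall>g F. N - g = n \<longrightarrow> 1 \<le> g \<longrightarrow> g \<le> Suc (R*P) \<longrightarrow>
    propagate Ls g (N - g) F (MData q) = Wf g (snd F) q"
  if q: "q < nq C"
proof (induction n)
  case 0 then show ?case by (simp add: N_eq)
next
  case (Suc n)
  show ?case
  proof (intro allI impI)
    fix g F assume h: "N - g = Suc n" "1 \<le> g" "g \<le> Suc (R*P)"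
    show "propagate Ls g (N - g) F (MData q) = Wf g (snd F) q"
    proof (cases "g = Suc (R*P)")
      case True
      then have "N - g = 1" by (simp add: N_eq)
      then show ?thesis using True final_flips_MData[OF q] by (simp add: Wf_def pend_final)
    next
      case False
      then have gl: "g \<le> R*P" using h by simp
      obtain r t where rt: "g = Suc (r*P + t)" "r < R" "t < P" using g_decomp[OF h(2) gl] by blast
      have L: "Ls g = round_layer C S r t" using rt Ls_round by simp
      have n: "N - Suc g = n" using h by simp
      have "propagate Ls g (N - g) F (MData q) = propagate Ls (Suc g) n (layer_apply (Ls g) F) (MData q)"
        unfolding h(1) by (simp add: rl_flips_MData L)
      also have "\<dots> = Wf (Suc g) (snd (layer_apply (Ls g) F)) q"
        using Suc.IH n gl by (metis le_SucI le_add1 plus_1_eq_Suc Suc_le_mono)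
      also have "\<dots> = Wf g (snd F) q"
        using W_step[OF rt(2) rt(3), of "snd F" q "fst F"] L rt(1) by simp
      finally show ?thesis .
    qed
  qed
qed

lemma W: "1 \<le> g \<Longrightarrow> g \<le> Suc (R*P) \<Longrightarrow> q < nq C \<Longrightarrow>
    propagate Ls g (N - g) F (MData q) = Wf g (snd F) q"
  using W_aux by blast

end

lemma finite_supp[simp]: "finite (supp C c)"
  by (cases c) (auto simp: supp.simps)

lemma supp_lt: "q \<in> supp C c \<Longrightarrow> q < nq C"
  by (cases c) (auto simp: supp.simps)

context memx begin

definition Pi :: "nat \<Rightarrow> (qubit \<Rightarrow> bool) \<Rightarrow> nat \<Rightarrow> (nat \<times> nat) set" where
  "Pi t Z i = {(q,k). k < mz C \<and> q \<in> supp C (XC i) \<and> q \<in> supp C (ZC k) \<and> Z (Anc (ZC k)) \<and>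
       prepT S (ZC k) < t \<and> t \<le> cnT S (ZC k) q \<and> cnT S (ZC k) q < cnT S (XC i) q}"

definition Mform :: "nat \<Rightarrow> (qubit \<Rightarrow> bool) \<Rightarrow> nat \<Rightarrow> bool" where
  "Mform t Z i = ((prepT S (XC i) < t \<and> Z (Anc (XC i))) \<noteq>
      (par {q \<in> supp C (XC i). t \<le> cnT S (XC i) q \<and> Z (Data q)} \<noteq> par (Pi t Z i)))"

lemma finite_Pi: "finite (Pi t Z i)"
proof -
  have "Pi t Z i \<subseteq> supp C (XC i) \<times> {..<mz C}" by (auto simp: Pi_def)
  then show ?thesis by (rule finite_subset) auto
qed

lemma M_step: assumes i: "i < mx C" and r: "r < R" and t: "t < measT S (XC i)"
  shows "Mform t Z i = Mform (Suc t) (snd (layer_apply (round_layer C S r t) (X, Z))) i"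
proof -
  let ?Z' = "snd (layer_apply (round_layer C S r t) (X, Z))"
  define A where "A = {q \<in> supp C (XC i). Suc t \<le> cnT S (XC i) q}"
  define K where "K q = {k. k < mz C \<and> q \<in> supp C (ZC k) \<and> cnT S (ZC k) q = t \<and> Z (Anc (ZC k))}" for q
  define Da where "Da = {q \<in> supp C (XC i). cnT S (XC i) q = t \<and> Z (Data q)}"
  define Db where "Db = {q \<in> supp C (XC i). Suc t \<le> cnT S (XC i) q \<and> Z (Data q)}"
  have finA: "finite A" by (simp add: A_def)
  have finK: "\<forall>q\<in>A. finite (K q)" by (simp add: K_def)
  have D0: "{q \<in> supp C (XC i). t \<le> cnT S (XC i) q \<and> Z (Data q)} = Da \<union> Db"
    by (auto simp: Da_def Db_def)
  have D0d: "Da \<inter> Db = {}" by (auto simp: Da_def Db_def)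
  have finD: "finite Da" "finite Db" by (auto simp: Da_def Db_def)
  have D': "{q \<in> supp C (XC i). Suc t \<le> cnT S (XC i) q \<and> ?Z' (Data q)} = {q \<in> A. Z (Data q) \<noteq> par (K q)}"
    by (auto simp: A_def K_def apZ_Data)
  have pD': "par {q \<in> A. Z (Data q) \<noteq> par (K q)} = (par Db \<noteq> par (SIGMA q:A. K q))"
    unfolding par_xor[OF finA] par_sigma[OF finA finK] by (simp add: A_def Db_def conj_ac)
  have Pi_split: "Pi t Z i = (SIGMA q:A. K q) \<union> Pi (Suc t) ?Z' i"
  proof (intro set_eqI iffI)
    fix x assume "x \<in> Pi t Z i"
    then obtain q k where x: "x = (q,k)" and h: "k < mz C" "q \<in> supp C (XC i)" "q \<in> supp C (ZC k)" "Z (Anc (ZC k))"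
       "prepT S (ZC k) < t" "t \<le> cnT S (ZC k) q" "cnT S (ZC k) q < cnT S (XC i) q"
      by (auto simp: Pi_def)
    show "x \<in> (SIGMA q:A. K q) \<union> Pi (Suc t) ?Z' i"
      using h by (cases "cnT S (ZC k) q = t") (auto simp: x A_def K_def Pi_def apZ_AncZ)
  next
    fix x assume "x \<in> (SIGMA q:A. K q) \<union> Pi (Suc t) ?Z' i"
    then show "x \<in> Pi t Z i"
    proof
      assume "x \<in> (SIGMA q:A. K q)"
      then obtain q k where x: "x = (q,k)" and h: "q \<in> A" "k \<in> K q" by auto
      have "prepT S (ZC k) < cnT S (ZC k) q" using vcq[of "ZC k" q] h by (auto simp: K_def)
      then show ?thesis using h by (auto simp: x A_def K_def Pi_def)
    next
      assume "x \<in> Pi (Suc t) ?Z' i"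
      then show ?thesis by (auto simp: Pi_def apZ_AncZ)
    qed
  qed
  have Pi_d: "(SIGMA q:A. K q) \<inter> Pi (Suc t) ?Z' i = {}" by (auto simp: A_def K_def Pi_def)
  have finS: "finite (SIGMA q:A. K q)" using finA finK by auto
  have anc: "(prepT S (XC i) < Suc t \<and> ?Z' (Anc (XC i))) = ((prepT S (XC i) < t \<and> Z (Anc (XC i))) \<noteq> par Da)"
  proof -
    have e: "par {q \<in> supp C (XC i). i < mx C \<and> cnT S (XC i) q = t \<and> snd (X,Z) (Data q)} = par Da"
      using i by (simp add: Da_def)
    have "Da = {}" if "t \<le> prepT S (XC i)"
      using that vcq[of "XC i"] i by (force simp: Da_def)
    then show ?thesis unfolding apZ_AncX e using i by (cases "t < prepT S (XC i)"; cases "t = prepT S (XC i)") auto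
  qed
  have "Mform t Z i = ((prepT S (XC i) < t \<and> Z (Anc (XC i))) \<noteq> ((par Da \<noteq> par Db) \<noteq>
           (par (SIGMA q:A. K q) \<noteq> par (Pi (Suc t) ?Z' i))))"
    unfolding Mform_def D0 par_Un[OF finD D0d] Pi_split par_Un[OF finS finite_Pi Pi_d] by simp
  also have "\<dots> = Mform (Suc t) ?Z' i"
    unfolding Mform_def D' pD' anc by auto
  finally show ?thesis .
qed

lemma rl_flips_MAncX: "layer_flips (round_layer C S r t) F (MAnc r' (XC i)) =
   (r' = r \<and> i < mx C \<and> measT S (XC i) = t \<and> snd F (Anc (XC i)))"
proof -
  have e1: "{u. MeasZ u (MAnc r' (XC i)) \<in> round_layer C S r t \<and> fst F u} = {}"
    by (auto simp: rl_MeasZ)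
  have e2: "{u. MeasX u (MAnc r' (XC i)) \<in> round_layer C S r t \<and> snd F u} =
     (if r' = r \<and> i < mx C \<and> measT S (XC i) = t \<and> snd F (Anc (XC i)) then {Anc (XC i)} else {})"
    by (auto simp: rl_MeasX)
  show ?thesis unfolding flips_par e1 e2 by (simp add: par_def)
qed

lemma M_aux: "\<forall>t F. measT S (XC i) - t = d \<longrightarrow> t \<le> measT S (XC i) \<longrightarrow>
   propagate Ls (Suc (r*P+t)) (N - Suc (r*P+t)) F (MAnc r (XC i)) = Mform t (snd F) i"
  if i: "i < mx C" and r: "r < R"
proof (induction d)
  case 0
  show ?case
  proof (intro allI impI)
    fix t and F :: frame assume h: "measT S (XC i) - t = 0" "t \<le> measT S (XC i)"
    then have tm: "t = measT S (XC i)" by simp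
    have tP: "t < P" using vc[of "XC i"] i tm by simp
    have gb: "Suc (r*P+t) \<le> R*P" using rt_bound[OF r tP] by simp
    then have n: "N - Suc (r*P+t) = Suc (N - Suc (Suc (r*P+t)))" by (simp add: N_eq)
    have nf: "\<not> propagate Ls (Suc (Suc (r*P+t))) n' G (MAnc r (XC i))" for n' G
      by (rule no_flip_MAnc) (simp add: tm)
    have m1: "{q \<in> supp C (XC i). t \<le> cnT S (XC i) q \<and> snd F (Data q)} = {}"
      using vcq[of "XC i"] i tm by force
    have m2: "Pi t (snd F) i = {}"
      using vcq[of "XC i"] i tm by (force simp: Pi_def)
    have "Mform t (snd F) i = snd F (Anc (XC i))"
      unfolding Mform_def m1 m2 using vc[of "XC i"] i tm by simp
    then show "propagate Ls (Suc (r*P+t)) (N - Suc (r*P+t)) F (MAnc r (XC i)) = Mform t (snd F) i"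
      unfolding n using nf Ls_round[OF r tP] rl_flips_MAncX i tm by simp
  qed
next
  case (Suc d)
  show ?case
  proof (intro allI impI)
    fix t and F :: frame assume h: "measT S (XC i) - t = Suc d" "t \<le> measT S (XC i)"
    then have tm: "t < measT S (XC i)" by simp
    have tP: "t < P" using vc[of "XC i"] i tm by simp
    have gb: "Suc (r*P+t) \<le> R*P" using rt_bound[OF r tP] by simp
    then have n: "N - Suc (r*P+t) = Suc (N - Suc (r*P+Suc t))" by (simp add: N_eq)
    have L: "Ls (Suc (r*P+t)) = round_layer C S r t" using Ls_round[OF r tP] .
    have "propagate Ls (Suc (r*P+t)) (N - Suc (r*P+t)) F (MAnc r (XC i)) =
          propagate Ls (Suc (r*P+Suc t)) (N - Suc (r*P+Suc t)) (layer_apply (round_layer C S r t) F) (MAnc r (XC i))"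
      unfolding n using L rl_flips_MAncX tm by simp
    also have "\<dots> = Mform (Suc t) (snd (layer_apply (round_layer C S r t) F)) i"
    proof -
      have "measT S (XC i) - Suc t = d" "Suc t \<le> measT S (XC i)" using h tm by auto
      then show ?thesis by (rule Suc.IH[rule_format])
    qed
    also have "\<dots> = Mform t (snd F) i"
      using M_step[OF i r tm, of "snd F" "fst F"] by simp
    finally show "propagate Ls (Suc (r*P+t)) (N - Suc (r*P+t)) F (MAnc r (XC i)) = Mform t (snd F) i" .
  qed
qed

lemma M: "i < mx C \<Longrightarrow> r < R \<Longrightarrow> t \<le> measT S (XC i) \<Longrightarrow>
   propagate Ls (Suc (r*P+t)) (N - Suc (r*P+t)) F (MAnc r (XC i)) = Mform t (snd F) i"
  using M_aux by blast

end

fun opq :: "op \<Rightarrow> qubit set" where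
  "opq (PrepZ u) = {u}" | "opq (PrepX u) = {u}" | "opq (MeasZ u m) = {u}" | "opq (MeasX u m) = {u}"
| "opq (CNOT a b) = {a, b}" | "opq (Idle u) = {u}"

lemma fault_ok_Z: "fault_ok p (PauliF X Z) \<Longrightarrow> Z \<subseteq> opq p"
  by (cases p) auto

lemma fault_ok_PrepZ: "fault_ok (PrepZ u) (PauliF X Z) \<Longrightarrow> Z = {}" by simp

lemma rl_ops: assumes "p \<in> round_layer C S r t"
  shows "(\<exists>i. p = PrepX (Anc (XC i))) \<or> (\<exists>u. p = PrepZ u) \<or> (\<exists>u m. p = MeasX u m) \<or> (\<exists>u m. p = MeasZ u m) \<or>
    (\<exists>i q. p = CNOT (Anc (XC i)) (Data q)) \<or>
    (\<exists>k q. p = CNOT (Data q) (Anc (ZC k)) \<and> k < mz C \<and> q \<in> supp C (ZC k) \<and> cnT S (ZC k) q = t) \<or>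
    (\<exists>i. p = Idle (Anc (XC i))) \<or>
    (\<exists>k. p = Idle (Anc (ZC k)) \<and> k < mz C \<and> t \<noteq> prepT S (ZC k)) \<or>
    (\<exists>q. p = Idle (Data q))"
proof -
  have "p \<in> {CNOT (Data q) (Anc c) | c q. c \<in> checks C \<and> \<not> isX c \<and> q \<in> supp C c \<and> cnT S c q = t} \<Longrightarrow>
    (\<exists>k q. p = CNOT (Data q) (Anc (ZC k)) \<and> k < mz C \<and> q \<in> supp C (ZC k) \<and> cnT S (ZC k) q = t) \<or>
    (\<exists>i q. p = CNOT (Anc (XC i)) (Data q))"
    by (auto, case_tac c, auto)
  moreover have "p \<in> {CNOT (Anc c) (Data q) | c q. c \<in> checks C \<and> isX c \<and> q \<in> supp C c \<and> cnT S c q = t} \<Longrightarrow>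
    (\<exists>i q. p = CNOT (Anc (XC i)) (Data q))"
    by (auto, case_tac c, auto)
  moreover have "p \<in> {Idle (Anc c) | c. c \<in> checks C \<and> t \<noteq> prepT S c \<and> t \<noteq> measT S c \<and>
                          t \<notin> cnT S c ` supp C c} \<Longrightarrow>
    (\<exists>i. p = Idle (Anc (XC i))) \<or> (\<exists>k. p = Idle (Anc (ZC k)) \<and> k < mz C \<and> t \<noteq> prepT S (ZC k))"
    by (auto, case_tac c, auto)
  moreover have "p \<in> {PrepX (Anc c) | c. c \<in> checks C \<and> isX c \<and> prepT S c = t} \<Longrightarrow>
    (\<exists>i. p = PrepX (Anc (XC i)))"
    by (auto, case_tac c, auto)
  ultimately show ?thesis using assms unfolding round_layer_def by blast
qed

context memx begin

lemma suffix_cases: assumes k: "k < mz C"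
  shows "{q \<in> supp C (ZC k). s \<le> cnT S (ZC k) q} = {} \<or>
         {q \<in> supp C (ZC k). s \<le> cnT S (ZC k) q} = supp C (ZC k) \<or>
         (\<exists>rr \<in> resid_idx C S False. {q \<in> supp C (ZC k). s \<le> cnT S (ZC k) q} = resid_set C S rr)"
proof -
  let ?A = "{q \<in> supp C (ZC k). s \<le> cnT S (ZC k) q}"
  let ?f = "cnT S (ZC k)"
  show ?thesis
  proof (cases "?A = {}")
    case True then show ?thesis by simp
  next
    case False
    have fin: "finite ?A" by simp
    have "Min (?f ` ?A) \<in> ?f ` ?A" using fin False by (intro Min_in) auto
    then obtain q0 where q0a: "q0 \<in> ?A" "?f q0 = Min (?f ` ?A)" by auto
    have q0: "q0 \<in> ?A" "\<forall>q \<in> ?A. ?f q0 \<le> ?f q" using q0a fin by auto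
    have eqr: "?A = resid_set C S (ZC k, q0)"
      using q0 by (auto simp: resid_set_def)
    show ?thesis
    proof (cases "\<exists>q' \<in> supp C (ZC k). ?f q' < ?f q0")
      case True
      then have "(ZC k, q0) \<in> resid_idx C S False" using q0 k by (auto simp: resid_idx_def)
      then show ?thesis using eqr by blast
    next
      case False
      then have "?A = supp C (ZC k)" using q0 by force
      then show ?thesis by simp
    qed
  qed
qed

end

context memx begin

definition goodA :: "nat set \<Rightarrow> bool" where
  "goodA A \<longleftrightarrow> A = {} \<or> (\<exists>q0. A = {q0}) \<or> (\<exists>k<mz C. \<exists>s. A = {q \<in> supp C (ZC k). s \<le> cnT S (ZC k) q})"

lemma good_sub: assumes "A \<subseteq> {q0}" shows "goodA A"
proof -
  have "A = {} \<or> A = {q0}" using assms by (rule subset_singletonD)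
  then show ?thesis unfolding goodA_def by (elim disjE) auto
qed

lemma good_empty: "goodA {}" by (simp add: goodA_def)
lemma good_suffix: "k < mz C \<Longrightarrow> goodA {q \<in> supp C (ZC k). s \<le> cnT S (ZC k) q}"
  unfolding goodA_def
  apply (rule disjI2, rule disjI2)
  apply (rule exI[of _ k])
  apply (intro conjI exI[of _ s])
   apply simp_all
  done

lemma par_K0: "(\<forall>k. Anc (ZC k) \<notin> Z) \<Longrightarrow>
   par {k. k < mz C \<and> q \<in> supp C (ZC k) \<and> Anc (ZC k) \<in> Z \<and> pend g k q} = False"
  by simp

lemma par_K1: assumes a: "\<forall>k. Anc (ZC k) \<in> Z \<longrightarrow> k = k0"
  shows "par {k. k < mz C \<and> q \<in> supp C (ZC k) \<and> Anc (ZC k) \<in> Z \<and> pend g k q} =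
   (k0 < mz C \<and> q \<in> supp C (ZC k0) \<and> Anc (ZC k0) \<in> Z \<and> pend g k0 q)"
proof (cases "k0 < mz C \<and> q \<in> supp C (ZC k0) \<and> Anc (ZC k0) \<in> Z \<and> pend g k0 q")
  case True
  have "{k. k < mz C \<and> q \<in> supp C (ZC k) \<and> Anc (ZC k) \<in> Z \<and> pend g k q} = {k0}"
  proof (intro set_eqI iffI)
    fix x assume "x \<in> {k. k < mz C \<and> q \<in> supp C (ZC k) \<and> Anc (ZC k) \<in> Z \<and> pend g k q}"
    then show "x \<in> {k0}" using a by simp
  next
    fix x assume "x \<in> {k0}" then show "x \<in> {k. k < mz C \<and> q \<in> supp C (ZC k) \<and> Anc (ZC k) \<in> Z \<and> pend g k q}"
      using True by simp
  qed
  then show ?thesis using True by (simp add: par_def)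
next
  case False
  have e: "{k. k < mz C \<and> q \<in> supp C (ZC k) \<and> Anc (ZC k) \<in> Z \<and> pend g k q} = {}"
  proof (intro set_eqI iffI)
    fix x assume "x \<in> {k. k < mz C \<and> q \<in> supp C (ZC k) \<and> Anc (ZC k) \<in> Z \<and> pend g k q}"
    then have "x = k0" using a by simp
    then show "x \<in> {}" using False \<open>x \<in> _\<close> by simp
  qed simp
  show ?thesis unfolding e using False by simp
qed

lemma eff_Pauli: "g \<le> R*P \<Longrightarrow> q < nq C \<Longrightarrow>
  mech_effect Ls N (g, p, PauliF X Z) (MData q) =
  ((Data q \<in> Z) \<noteq> par {k. k < mz C \<and> q \<in> supp C (ZC k) \<and> Anc (ZC k) \<in> Z \<and> pend (Suc g) k q})"
proof -
  assume a: "g \<le> R*P" "q < nq C"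
  have "mech_effect Ls N (g, p, PauliF X Z) (MData q) =
     propagate Ls (Suc g) (N - Suc g) ((\<lambda>u. u \<in> X), (\<lambda>u. u \<in> Z)) (MData q)" by simp
  also have "\<dots> = Wf (Suc g) (snd ((\<lambda>u. u \<in> X), (\<lambda>u. u \<in> Z))) q"
    by (rule W) (use a in auto)
  finally show ?thesis by (simp add: Wf_def)
qed

lemma class_noZ: assumes "g \<le> R*P" "\<forall>k. Anc (ZC k) \<notin> Z" "{q. Data q \<in> Z} \<subseteq> {q0}"
  shows "\<exists>A. (\<forall>q<nq C. mech_effect Ls N (g, p, PauliF X Z) (MData q) \<longleftrightarrow> q \<in> A) \<and> goodA A"
proof (intro exI conjI)
  show "\<forall>q<nq C. mech_effect Ls N (g, p, PauliF X Z) (MData q) \<longleftrightarrow> q \<in> {q. Data q \<in> Z}"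
    using assms by (simp add: eff_Pauli[OF assms(1)] del: mech_effect.simps)
  show "goodA {q. Data q \<in> Z}" using assms(3) by (rule good_sub)
qed

lemma mech_class: assumes f: "f \<in> mechs Ls N"
  shows "\<exists>A. (\<forall>q<nq C. mech_effect Ls N f (MData q) \<longleftrightarrow> q \<in> A) \<and> goodA A"
proof -
  obtain g p e where fe: "f = (g, p, e)" and g: "g < N" and p: "p \<in> Ls g" and ok: "fault_ok p e"
    using f by (auto simp: mechs_def)
  show ?thesis
  proof (cases e)
    case FlipF
    let ?A = "{q. meas_label p = Some (MData q)}"
    have "goodA ?A"
    proof (cases "\<exists>q0. meas_label p = Some (MData q0)")
      case True then obtain q0 where "meas_label p = Some (MData q0)" by blast
      then have "?A \<subseteq> {q0}" by auto
      then show ?thesis by (rule good_sub)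
    next
      case False then have "?A \<subseteq> {0}" by auto
      then show ?thesis by (rule good_sub)
    qed
    then show ?thesis unfolding fe FlipF by (intro exI[of _ ?A]) auto
  next
    case (PauliF X Z)
    have Zs: "Z \<subseteq> opq p" using ok PauliF fault_ok_Z by simp
    show ?thesis
    proof (cases "g = Suc (R*P)")
      case True
      then have "N - Suc g = 0" by (simp add: N_eq)
      then show ?thesis unfolding fe PauliF using True good_empty
        by (intro exI[of _ "{}"] conjI) auto
    next
      case False
      then have gl: "g \<le> R*P" using g by (simp add: N_eq)
      show ?thesis
      proof (cases "g = 0")
        case True
        have pend0: "\<not> pend (Suc 0) k q" for k q by (simp add: pend_def)
        have eff: "mech_effect Ls N f (MData q) = (Data q \<in> Z)" if "q < nq C" for q
          using eff_Pauli[OF gl that, of p X Z] True pend0 fe PauliF by (simp del: mech_effect.simps)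
        have "\<exists>q0. {q. Data q \<in> Z} \<subseteq> {q0}"
        proof -
          have "p \<in> {PrepX (Data q) | q. q < nq C} \<union> anc_idle C" using p True Ls_zero by simp
          then have "(\<exists>q0. p = PrepX (Data q0)) \<or> (\<exists>c. p = Idle (Anc c))" by (auto simp: anc_idle_def)
          then show ?thesis
          proof (elim disjE exE)
            fix q0 assume "p = PrepX (Data q0)"
            then have "Z \<subseteq> {Data q0}" using Zs by simp
            then show ?thesis by (intro exI[of _ q0]) auto
          next
            fix c assume "p = Idle (Anc c)"
            then have "Z \<subseteq> {Anc c}" using Zs by simp
            then show ?thesis by (intro exI[of _ 0]) auto
          qed
        qed
        then obtain q0 where "{q. Data q \<in> Z} \<subseteq> {q0}" by blast
        then have "goodA {q. Data q \<in> Z}" by (rule good_sub)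
        then show ?thesis using eff by (intro exI[of _ "{q. Data q \<in> Z}"] conjI) auto
      next
        case False
        then have g1: "1 \<le> g" by simp
        obtain r t where rt: "g = Suc (r*P + t)" "r < R" "t < P" using g_decomp[OF g1 gl] by blast
        have pr: "p \<in> round_layer C S r t" using p rt Ls_round by simp
        have pend_n: "pend (Suc g) k q = (prepT S (ZC k) < Suc t \<and> Suc t \<le> cnT S (ZC k) q)"
          if "k < mz C" "q \<in> supp C (ZC k)" for k q
          using pend_next[OF rt(2) rt(3) that] rt(1) by simp
        from rl_ops[OF pr] show ?thesis
        proof (elim disjE exE conjE)
          fix i assume "p = PrepX (Anc (XC i))"
          then show ?thesis unfolding fe PauliF using Zs by (intro class_noZ[OF gl, of _ 0]) auto
        next
          fix u assume "p = PrepZ u"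
          then have "Z = {}" using ok PauliF by simp
          then show ?thesis unfolding fe PauliF by (intro class_noZ[OF gl, of _ 0]) auto
        next
          fix u m assume "p = MeasX u m" then show ?thesis using ok PauliF by simp
        next
          fix u m assume "p = MeasZ u m" then show ?thesis using ok PauliF by simp
        next
          fix i q0 assume "p = CNOT (Anc (XC i)) (Data q0)"
          then show ?thesis unfolding fe PauliF using Zs by (intro class_noZ[OF gl, of _ q0]) auto
        next
          fix i assume "p = Idle (Anc (XC i))"
          then show ?thesis unfolding fe PauliF using Zs by (intro class_noZ[OF gl, of _ 0]) auto
        next
          fix q0 assume "p = Idle (Data q0)"
          then show ?thesis unfolding fe PauliF using Zs by (intro class_noZ[OF gl, of _ q0]) auto
        next
          fix k0 assume p0: "p = Idle (Anc (ZC k0))" and k0: "k0 < mz C" and tp: "t \<noteq> prepT S (ZC k0)"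
          have Z1: "\<forall>k. Anc (ZC k) \<in> Z \<longrightarrow> k = k0" "\<forall>q. Data q \<notin> Z" using Zs p0 by auto
          have eff: "mech_effect Ls N f (MData q) =
              (Anc (ZC k0) \<in> Z \<and> q \<in> supp C (ZC k0) \<and> prepT S (ZC k0) < Suc t \<and> Suc t \<le> cnT S (ZC k0) q)"
            if "q < nq C" for q
            unfolding fe PauliF eff_Pauli[OF gl that] par_K1[OF Z1(1)] using Z1(2) k0 pend_n by auto
          show ?thesis
          proof (cases "Anc (ZC k0) \<in> Z \<and> prepT S (ZC k0) < Suc t")
            case True
            then show ?thesis using eff k0 supp_lt good_suffix[OF k0]
              by (intro exI[of _ "{q \<in> supp C (ZC k0). Suc t \<le> cnT S (ZC k0) q}"] conjI) auto
          next
            case False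
            then show ?thesis using eff good_empty
              by (intro exI[of _ "{}"] conjI) auto
          qed
        next
          fix k0 q0 assume p0: "p = CNOT (Data q0) (Anc (ZC k0))" and k0: "k0 < mz C"
            and q0: "q0 \<in> supp C (ZC k0)" and ct: "cnT S (ZC k0) q0 = t"
          have Z1: "\<forall>k. Anc (ZC k) \<in> Z \<longrightarrow> k = k0" "\<forall>q. Data q \<in> Z \<longrightarrow> q = q0" using Zs p0 by auto
          have pt: "prepT S (ZC k0) < t" using vcq[of "ZC k0" q0] k0 q0 ct by simp
          have eff: "mech_effect Ls N f (MData q) =
              ((Data q \<in> Z) \<noteq> (Anc (ZC k0) \<in> Z \<and> q \<in> supp C (ZC k0) \<and> Suc t \<le> cnT S (ZC k0) q))"
            if "q < nq C" for q
            unfolding fe PauliF eff_Pauli[OF gl that] par_K1[OF Z1(1)] using k0 pend_n pt by auto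
          have inj: "inj_on (cnT S (ZC k0)) (supp C (ZC k0))" using vinj[of "ZC k0"] k0 by simp
          show ?thesis
          proof (cases "Anc (ZC k0) \<in> Z")
            case False
            have "goodA {q. Data q \<in> Z}" using Z1(2) by (intro good_sub[of _ q0]) auto
            then show ?thesis using eff False
              by (intro exI[of _ "{q. Data q \<in> Z}"] conjI) auto
          next
            case True
            show ?thesis
            proof (cases "Data q0 \<in> Z")
              case False
              then have "Data q \<notin> Z" for q using Z1(2) by auto
              then show ?thesis using eff True k0 supp_lt good_suffix[OF k0]
                by (intro exI[of _ "{q \<in> supp C (ZC k0). Suc t \<le> cnT S (ZC k0) q}"] conjI) auto
            next
              case dq: True
              have "mech_effect Ls N f (MData q) = (q \<in> supp C (ZC k0) \<and> t \<le> cnT S (ZC k0) q)"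
                if "q < nq C" for q
              proof (cases "q = q0")
                case True then show ?thesis using eff[OF that] dq \<open>Anc (ZC k0) \<in> Z\<close> q0 ct by simp
              next
                case False
                then have "Data q \<notin> Z" using Z1(2) by auto
                moreover have "q \<in> supp C (ZC k0) \<Longrightarrow> cnT S (ZC k0) q \<noteq> t"
                  using inj q0 ct False by (auto dest: inj_onD)
                ultimately show ?thesis using eff[OF that] \<open>Anc (ZC k0) \<in> Z\<close> by auto
              qed
              then show ?thesis using k0 supp_lt good_suffix[OF k0]
                by (intro exI[of _ "{q \<in> supp C (ZC k0). t \<le> cnT S (ZC k0) q}"] conjI) auto
            qed
          qed
        qed
      qed
    qed
  qed
qed

end

lemma par_swap: assumes "finite A" "finite B"
  shows "par {a\<in>A. par {b\<in>B. Q a b}} = par {b\<in>B. par {a\<in>A. Q a b}}"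
proof -
  have f1: "\<forall>a\<in>A. finite {b\<in>B. Q a b}" "\<forall>b\<in>B. finite {a\<in>A. Q a b}" using assms by auto
  have "par {a\<in>A. par {b\<in>B. Q a b}} = par (SIGMA a:A. {b\<in>B. Q a b})"
    using par_sigma[OF assms(1) f1(1)] by simp
  also have "(SIGMA a:A. {b\<in>B. Q a b}) = prod.swap ` (SIGMA b:B. {a\<in>A. Q a b})" by auto
  also have "par \<dots> = par (SIGMA b:B. {a\<in>A. Q a b})" by (rule par_image) (simp add: inj_on_def)
  also have "\<dots> = par {b\<in>B. par {a\<in>A. Q a b}}"
    using par_sigma[OF assms(2) f1(2)] by simp
  finally show ?thesis .
qed

lemma par_fibers: assumes F: "finite F"
  shows "par {c. par {f\<in>F. col f = Some c} \<and> \<phi> c} =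
         par {f\<in>F. case col f of None \<Rightarrow> False | Some c \<Rightarrow> \<phi> c}"
proof -
  define Y where "Y = {c. \<exists>f\<in>F. col f = Some c \<and> \<phi> c}"
  have Ysub: "Y \<subseteq> (\<lambda>f. the (col f)) ` F" by (force simp: Y_def)
  have finY: "finite Y" using finite_subset[OF Ysub] F by simp
  have finfib: "\<forall>c\<in>Y. finite {f\<in>F. col f = Some c}" using F by simp
  have e1: "{c. par {f\<in>F. col f = Some c} \<and> \<phi> c} = {c\<in>Y. par {f\<in>F. col f = Some c}}"
  proof (intro set_eqI iffI)
    fix c assume c: "c \<in> {c. par {f\<in>F. col f = Some c} \<and> \<phi> c}"
    then have "0 < card {f\<in>F. col f = Some c}" by (simp add: par_def odd_pos)
    then have "{f\<in>F. col f = Some c} \<noteq> {}" by (metis card_gt_0_iff)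
    then obtain f where "f \<in> F" "col f = Some c" by blast
    then show "c \<in> {c\<in>Y. par {f\<in>F. col f = Some c}}" using c by (auto simp: Y_def)
  next
    fix c assume "c \<in> {c\<in>Y. par {f\<in>F. col f = Some c}}"
    then show "c \<in> {c. par {f\<in>F. col f = Some c} \<and> \<phi> c}" by (auto simp: Y_def)
  qed
  have e2: "(SIGMA c:Y. {f\<in>F. col f = Some c}) =
      (\<lambda>f. (the (col f), f)) ` {f\<in>F. case col f of None \<Rightarrow> False | Some c \<Rightarrow> \<phi> c}"
  proof (intro set_eqI iffI)
    fix x assume "x \<in> (SIGMA c:Y. {f\<in>F. col f = Some c})"
    then obtain c f where x: "x = (c, f)" "c \<in> Y" "f \<in> F" "col f = Some c" by auto
    then have "\<phi> c" by (auto simp: Y_def)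
    then show "x \<in> (\<lambda>f. (the (col f), f)) ` {f\<in>F. case col f of None \<Rightarrow> False | Some c \<Rightarrow> \<phi> c}"
      using x by (intro image_eqI[of _ _ f]) auto
  next
    fix x assume "x \<in> (\<lambda>f. (the (col f), f)) ` {f\<in>F. case col f of None \<Rightarrow> False | Some c \<Rightarrow> \<phi> c}"
    then obtain f where f: "x = (the (col f), f)" "f \<in> F" "case col f of None \<Rightarrow> False | Some c \<Rightarrow> \<phi> c" by auto
    then obtain c where c: "col f = Some c" "\<phi> c" by (cases "col f") auto
    then show "x \<in> (SIGMA c:Y. {f\<in>F. col f = Some c})" using f by (auto simp: Y_def)
  qed
  have "par {c. par {f\<in>F. col f = Some c} \<and> \<phi> c} = par (SIGMA c:Y. {f\<in>F. col f = Some c})"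
    unfolding e1 using par_sigma[OF finY finfib] by simp
  also have "\<dots> = par {f\<in>F. case col f of None \<Rightarrow> False | Some c \<Rightarrow> \<phi> c}"
    unfolding e2 by (rule par_image) (auto simp: inj_on_def)
  finally show ?thesis .
qed

locale memc = memx +
  assumes css: "css_with_logicals C"
begin

lemma css_code_C: "css_code C" using css by (simp add: css_with_logicals_def)

lemma lx_ker: "l < kx C \<Longrightarrow> in_ker (hz C) (mz C) (nq C) (lx C l)"
  using css by (simp add: css_with_logicals_def logical_rows_def)

lemma supp_X: "supp C (XC i) = {q. q < nq C \<and> hx C i q}" by (simp add: supp.simps)
lemma supp_Z: "supp C (ZC k) = {q. q < nq C \<and> hz C k q}" by (simp add: supp.simps)

lemma row_even_X: "i < mx C \<Longrightarrow> k < mz C \<Longrightarrow> \<not> par {q \<in> supp C (XC i). q \<in> supp C (ZC k)}"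
proof -
  assume a: "i < mx C" "k < mz C"
  have "{q \<in> supp C (XC i). q \<in> supp C (ZC k)} = {q. q < nq C \<and> hx C i q \<and> hz C k q}"
    by (auto simp: supp_X supp_Z)
  then show ?thesis using css_code_C a by (simp add: css_code_def par_def)
qed

lemma row_even_L: "l < kx C \<Longrightarrow> k < mz C \<Longrightarrow> \<not> par {q \<in> {q. q < nq C \<and> lx C l q}. q \<in> supp C (ZC k)}"
proof -
  assume a: "l < kx C" "k < mz C"
  have "{q \<in> {q. q < nq C \<and> lx C l q}. q \<in> supp C (ZC k)} = {q. q < nq C \<and> hz C k q \<and> lx C l q}"
    by (auto simp: supp_Z)
  then show ?thesis using lx_ker[OF a(1)] a(2) by (simp add: in_ker_def par_def)
qed

fun colset :: "nat + (chk \<times> nat) \<Rightarrow> nat set" where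
  "colset (Inl q) = {q}" | "colset (Inr rr) = resid_set C S rr"

definition allowed :: "(nat + (chk \<times> nat)) set" where
  "allowed = Inl ` {..<nq C} \<union> Inr ` resid_idx C S False"

definition colok :: "mech \<Rightarrow> (nat + (chk \<times> nat)) option \<Rightarrow> bool" where
  "colok f c = (case c of
     None \<Rightarrow> (\<forall>i<mx C. \<not> par {q \<in> supp C (XC i). mech_effect Ls N f (MData q)}) \<and>
             (\<forall>l<kx C. \<not> par {q \<in> {q. q < nq C \<and> lx C l q}. mech_effect Ls N f (MData q)})
   | Some cc \<Rightarrow> cc \<in> allowed \<and> (\<forall>q<nq C. mech_effect Ls N f (MData q) \<longleftrightarrow> q \<in> colset cc))"

lemma colok_from_A: assumes A: "\<forall>q<nq C. mech_effect Ls N f (MData q) \<longleftrightarrow> q \<in> A"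
  shows "A \<inter> {..<nq C} = {} \<Longrightarrow> colok f None"
    and "k < mz C \<Longrightarrow> A = supp C (ZC k) \<Longrightarrow> colok f None"
    and "cc \<in> allowed \<Longrightarrow> A = colset cc \<Longrightarrow> colok f (Some cc)"
proof -
  assume "A \<inter> {..<nq C} = {}"
  then have "\<forall>q<nq C. \<not> mech_effect Ls N f (MData q)" using A by auto
  then have e: "\<And>Q. {q. q < nq C \<and> Q q \<and> mech_effect Ls N f (MData q)} = {}" by auto
  show "colok f None" by (simp add: colok_def supp_X e)
next
  assume k: "k < mz C" "A = supp C (ZC k)"
  have e1: "{q \<in> supp C (XC i). mech_effect Ls N f (MData q)} = {q \<in> supp C (XC i). q \<in> supp C (ZC k)}" for i
    using A k supp_lt by auto
  have e2: "{q \<in> {q. q < nq C \<and> lx C l q}. mech_effect Ls N f (MData q)} =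
      {q \<in> {q. q < nq C \<and> lx C l q}. q \<in> supp C (ZC k)}" for l
    using A k by auto
  show "colok f None" unfolding colok_def using row_even_X row_even_L k e1 e2 by simp
next
  assume "cc \<in> allowed" "A = colset cc"
  then show "colok f (Some cc)" using A by (simp add: colok_def)
qed

lemma mech_col: assumes f: "f \<in> mechs Ls N" shows "\<exists>c. colok f c"
proof -
  obtain A where A: "\<forall>q<nq C. mech_effect Ls N f (MData q) \<longleftrightarrow> q \<in> A" and g: "goodA A"
    using mech_class[OF f] by blast
  from g[unfolded goodA_def] show ?thesis
  proof (elim disjE exE conjE)
    assume "A = {}" then show ?thesis using colok_from_A(1)[OF A] by auto
  next
    fix q0 assume q0: "A = {q0}"
    show ?thesis
    proof (cases "q0 < nq C")
      case True
      then have "Inl q0 \<in> allowed" by (simp add: allowed_def)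
      then show ?thesis using colok_from_A(3)[OF A] q0 by force
    next
      case False then show ?thesis using colok_from_A(1)[OF A] q0 by auto
    qed
  next
    fix k s assume k: "k < mz C" and As: "A = {q \<in> supp C (ZC k). s \<le> cnT S (ZC k) q}"
    from suffix_cases[OF k, of s] show ?thesis
    proof (elim disjE bexE)
      assume "{q \<in> supp C (ZC k). s \<le> cnT S (ZC k) q} = {}"
      then show ?thesis using colok_from_A(1)[OF A] As by auto
    next
      assume "{q \<in> supp C (ZC k). s \<le> cnT S (ZC k) q} = supp C (ZC k)"
      then show ?thesis using colok_from_A(2)[OF A k] As by auto
    next
      fix rr assume rr: "rr \<in> resid_idx C S False" "{q \<in> supp C (ZC k). s \<le> cnT S (ZC k) q} = resid_set C S rr"
      then have "Inr rr \<in> allowed" by (simp add: allowed_def)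
      then show ?thesis using colok_from_A(3)[OF A, of "Inr rr"] rr As by auto
    qed
  qed
qed

end

lemma det_first: "i < mx C \<Longrightarrow> {MAnc 0 (XC i)} \<in> detectors C BX R"
  unfolding detectors_def by auto

lemma det_mid: "1 \<le> r \<Longrightarrow> r < R \<Longrightarrow> c \<in> checks C \<Longrightarrow> {MAnc (r - 1) c, MAnc r c} \<in> detectors C b R"
  unfolding detectors_def by blast

lemma det_last: "i < mx C \<Longrightarrow> insert (MAnc (R - 1) (XC i)) (MData ` supp C (XC i)) \<in> detectors C BX R"
  unfolding detectors_def by auto

lemma det_X: assumes D: "\<forall>D\<in>detectors C BX R. even (card {m\<in>D. T m})" and i: "i < mx C"
  and r: "r < R"
  shows "\<not> T (MAnc r (XC i))"
  using r
proof (induction r)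
  case 0
  have "even (card {m \<in> {MAnc 0 (XC i)}. T m})" using D det_first[OF i] by blast
  moreover have "{m \<in> {MAnc 0 (XC i)}. T m} = (if T (MAnc 0 (XC i)) then {MAnc 0 (XC i)} else {})" by auto
  ultimately show ?case by (cases "T (MAnc 0 (XC i))") auto
next
  case (Suc r)
  have "{MAnc r (XC i), MAnc (Suc r) (XC i)} \<in> detectors C BX R"
    using det_mid[of "Suc r" R "XC i" C BX] Suc.prems i by simp
  then have "even (card {m \<in> {MAnc r (XC i), MAnc (Suc r) (XC i)}. T m})"
    using D by blast
  moreover have "\<not> T (MAnc r (XC i))" using Suc by simp
  moreover have "{m \<in> {MAnc r (XC i), MAnc (Suc r) (XC i)}. T m} =
     (if T (MAnc (Suc r) (XC i)) then {MAnc (Suc r) (XC i)} else {})" using calculation(2) by auto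
  ultimately show ?case by (cases "T (MAnc (Suc r) (XC i))") auto
qed

lemma det_X_final: assumes D: "\<forall>D\<in>detectors C BX R. even (card {m\<in>D. T m})" and i: "i < mx C" and R: "1 \<le> R"
  shows "\<not> par {q \<in> supp C (XC i). T (MData q)}"
proof -
  have a: "\<not> T (MAnc (R - 1) (XC i))" using det_X[OF D i, of "R - 1"] R by simp
  have "even (card {m \<in> insert (MAnc (R - 1) (XC i)) (MData ` supp C (XC i)). T m})"
    using D det_last[OF i] by blast
  moreover have "{m \<in> insert (MAnc (R - 1) (XC i)) (MData ` supp C (XC i)). T m} =
      MData ` {q \<in> supp C (XC i). T (MData q)}" using a by auto
  ultimately show ?thesis by (simp add: par_def card_image inj_on_def)
qed

lemma obs_X: assumes "\<exists>Ob\<in>observables C BX. odd (card {m\<in>Ob. T m})"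
  shows "\<exists>l<kx C. par {q \<in> {q. q < nq C \<and> lx C l q}. T (MData q)}"
proof -
  obtain l where l: "l < kx C" "odd (card {m \<in> MData ` {q. q < nq C \<and> lx C l q}. T m})"
    using assms by auto
  have "{m \<in> MData ` {q. q < nq C \<and> lx C l q}. T m} = MData ` {q \<in> {q. q < nq C \<and> lx C l q}. T (MData q)}"
    by auto
  then show ?thesis using l by (auto simp: par_def card_image inj_on_def)
qed

context memc begin


lemma colset_par: assumes cc: "cc \<in> allowed"
  shows "par {q \<in> {q. q < nq C \<and> M q}. q \<in> colset cc} = ext_col (\<lambda>_. M) (resid_set C S) j cc"
proof (cases cc)
  case (Inl q0)
  then have q0: "q0 < nq C" using cc by (auto simp: allowed_def)
  have "{q \<in> {q. q < nq C \<and> M q}. q \<in> colset cc} = (if M q0 then {q0} else {})" using Inl q0 by auto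
  then show ?thesis using Inl by (simp add: par_def)
next
  case (Inr rr)
  then have rr: "rr \<in> resid_idx C S False" using cc by (auto simp: allowed_def)
  then have "resid_set C S rr \<subseteq> {..<nq C}"
    by (auto simp: resid_set_def resid_idx_def dest: supp_lt)
  then have "{q \<in> {q. q < nq C \<and> M q}. q \<in> colset cc} = {q \<in> resid_set C S rr. M q}" using Inr by auto
  then show ?thesis using Inr by (simp add: par_def)
qed

lemma lower: assumes F: "finite F" "F \<subseteq> mechs Ls N"
  and D: "\<forall>D\<in>detectors C BX R. even (card {m\<in>D. total_flips Ls N F m})"
  and O: "\<exists>Ob\<in>observables C BX. odd (card {m\<in>Ob. total_flips Ls N F m})"
  shows "ext_dist_Z C S (resid_idx C S False) \<le> enat (card F)"
proof -
  define col where "col f = (SOME c. colok f c)" for f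
  have cok: "colok f (col f)" if "f \<in> F" for f
    unfolding col_def using mech_col[of f] that F(2) by (metis someI_ex subsetD)
  define X where "X = {cc. par {f\<in>F. col f = Some cc} \<and> True}"
  have Xsub: "X \<subseteq> (\<lambda>f. the (col f)) ` F"
  proof
    fix cc assume "cc \<in> X"
    then have "0 < card {f\<in>F. col f = Some cc}" by (simp add: X_def par_def odd_pos)
    then have "{f\<in>F. col f = Some cc} \<noteq> {}" by (metis card_gt_0_iff)
    then obtain f where "f \<in> F" "col f = Some cc" by blast
    then show "cc \<in> (\<lambda>f. the (col f)) ` F" by force
  qed
  have Xall: "X \<subseteq> allowed"
  proof
    fix cc assume "cc \<in> X"
    then have "0 < card {f\<in>F. col f = Some cc}" by (simp add: X_def par_def odd_pos)
    then have "{f\<in>F. col f = Some cc} \<noteq> {}" by (metis card_gt_0_iff)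
    then obtain f where "f \<in> F" "col f = Some cc" by blast
    then show "cc \<in> allowed" using cok[of f] by (simp add: colok_def)
  qed
  have finX: "finite X" using finite_subset[OF Xsub] F(1) by simp
  have cardX: "card X \<le> card F"
    using card_mono[OF finite_imageI[OF F(1)] Xsub] card_image_le[OF F(1), of "\<lambda>f. the (col f)"] by linarith
  have T: "total_flips Ls N F m = par {f\<in>F. mech_effect Ls N f m}" for m
    by (simp add: total_flips_def par_def)
  have row: "par {c. par {f\<in>F. col f = Some c} \<and> ext_col (\<lambda>_. M) (resid_set C S) j c} =
             par {q \<in> {q. q < nq C \<and> M q}. total_flips Ls N F (MData q)}"
    if M0: "\<forall>f\<in>F. col f = None \<longrightarrow> \<not> par {q \<in> {q. q < nq C \<and> M q}. mech_effect Ls N f (MData q)}" for M j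
  proof -
    have "par {c. par {f\<in>F. col f = Some c} \<and> ext_col (\<lambda>_. M) (resid_set C S) j c} =
          par {f\<in>F. case col f of None \<Rightarrow> False | Some c \<Rightarrow> ext_col (\<lambda>_. M) (resid_set C S) j c}"
      by (rule par_fibers[OF F(1)])
    also have "{f\<in>F. case col f of None \<Rightarrow> False | Some c \<Rightarrow> ext_col (\<lambda>_. M) (resid_set C S) j c} =
               {f\<in>F. par {q \<in> {q. q < nq C \<and> M q}. mech_effect Ls N f (MData q)}}"
    proof (intro set_eqI iffI)
      fix f assume f: "f \<in> {f\<in>F. case col f of None \<Rightarrow> False | Some c \<Rightarrow> ext_col (\<lambda>_. M) (resid_set C S) j c}"
      then obtain cc where cc: "col f = Some cc" "ext_col (\<lambda>_. M) (resid_set C S) j cc" by (cases "col f") auto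
      have ok: "cc \<in> allowed" "\<forall>q<nq C. mech_effect Ls N f (MData q) \<longleftrightarrow> q \<in> colset cc"
        using cok[of f] f cc by (auto simp: colok_def)
      have "{q \<in> {q. q < nq C \<and> M q}. mech_effect Ls N f (MData q)} = {q \<in> {q. q < nq C \<and> M q}. q \<in> colset cc}"
        using ok(2) by auto
      then show "f \<in> {f\<in>F. par {q \<in> {q. q < nq C \<and> M q}. mech_effect Ls N f (MData q)}}"
        using colset_par[OF ok(1), of M j] cc f by simp
    next
      fix f assume f: "f \<in> {f\<in>F. par {q \<in> {q. q < nq C \<and> M q}. mech_effect Ls N f (MData q)}}"
      show "f \<in> {f\<in>F. case col f of None \<Rightarrow> False | Some c \<Rightarrow> ext_col (\<lambda>_. M) (resid_set C S) j c}"
      proof (cases "col f")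
        case None then show ?thesis using M0 f by auto
      next
        case (Some cc)
        have ok: "cc \<in> allowed" "\<forall>q<nq C. mech_effect Ls N f (MData q) \<longleftrightarrow> q \<in> colset cc"
          using cok[of f] f Some by (auto simp: colok_def)
        have "{q \<in> {q. q < nq C \<and> M q}. mech_effect Ls N f (MData q)} = {q \<in> {q. q < nq C \<and> M q}. q \<in> colset cc}"
          using ok(2) by auto
        then show ?thesis using colset_par[OF ok(1), of M j] Some f by simp
      qed
    qed
    also have "par {f\<in>F. par {q \<in> {q. q < nq C \<and> M q}. mech_effect Ls N f (MData q)}} =
               par {q \<in> {q. q < nq C \<and> M q}. par {f\<in>F. mech_effect Ls N f (MData q)}}"
      by (rule par_swap[OF F(1)]) simp
    finally show ?thesis by (simp add: T)
  qed
  have Xrow: "{c \<in> X. P c} = {c. par {f\<in>F. col f = Some c} \<and> P c}" for P by (auto simp: X_def)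
  have condH: "\<forall>i<mx C. even (card {c\<in>X. ext_col (hx C) (resid_set C S) i c})"
  proof (intro allI impI)
    fix i assume i: "i < mx C"
    have M0: "\<forall>f\<in>F. col f = None \<longrightarrow> \<not> par {q \<in> {q. q < nq C \<and> hx C i q}. mech_effect Ls N f (MData q)}"
    proof (intro ballI impI)
      fix f assume "f \<in> F" "col f = None"
      then have "\<not> par {q \<in> supp C (XC i). mech_effect Ls N f (MData q)}" using cok[of f] i by (simp add: colok_def)
      then show "\<not> par {q \<in> {q. q < nq C \<and> hx C i q}. mech_effect Ls N f (MData q)}" by (simp add: supp_X)
    qed
    have "ext_col (hx C) (resid_set C S) i = ext_col (\<lambda>_. hx C i) (resid_set C S) i"
      by (intro ext, case_tac x) auto
    then have "par {c\<in>X. ext_col (hx C) (resid_set C S) i c} = par {q \<in> {q. q < nq C \<and> hx C i q}. total_flips Ls N F (MData q)}"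
      unfolding Xrow using row[OF M0] by simp
    also have "\<dots> = False" using det_X_final[OF D i R1] by (simp add: supp_X)
    finally show "even (card {c\<in>X. ext_col (hx C) (resid_set C S) i c})" by (simp add: par_def)
  qed
  have condL: "\<exists>l<kx C. odd (card {c\<in>X. ext_col (lx C) (resid_set C S) l c})"
  proof -
    obtain l where l: "l < kx C" "par {q \<in> {q. q < nq C \<and> lx C l q}. total_flips Ls N F (MData q)}"
      using obs_X[OF O] by blast
    have M0: "\<forall>f\<in>F. col f = None \<longrightarrow> \<not> par {q \<in> {q. q < nq C \<and> lx C l q}. mech_effect Ls N f (MData q)}"
    proof (intro ballI impI)
      fix f assume "f \<in> F" "col f = None"
      then show "\<not> par {q \<in> {q. q < nq C \<and> lx C l q}. mech_effect Ls N f (MData q)}"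
        using cok[of f] l(1) by (simp add: colok_def)
    qed
    have "ext_col (lx C) (resid_set C S) l = ext_col (\<lambda>_. lx C l) (resid_set C S) l"
      by (intro ext, case_tac x) auto
    then have "par {c\<in>X. ext_col (lx C) (resid_set C S) l c} = par {q \<in> {q. q < nq C \<and> lx C l q}. total_flips Ls N F (MData q)}"
      unfolding Xrow using row[OF M0] by simp
    then show ?thesis using l by (auto simp: par_def)
  qed
  have "X \<in> {X. finite X \<and> X \<subseteq> Inl ` {..<nq C} \<union> Inr ` resid_idx C S False \<and>
           (\<forall>i<mx C. even (card {c \<in> X. ext_col (hx C) (resid_set C S) i c})) \<and>
           (\<exists>l<kx C. odd (card {c \<in> X. ext_col (lx C) (resid_set C S) l c}))}"
    using finX Xall condH condL by (simp add: allowed_def)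
  then have "ext_dist_Z C S (resid_idx C S False) \<le> enat (card X)"
    unfolding ext_dist_Z_def ext_dist_def by (intro Inf_lower) (rule imageI)
  also have "\<dots> \<le> enat (card F)" using cardX by simp
  finally show ?thesis .
qed

end

context memc begin

lemma noMeasX_Z: "MeasX u (MAnc r (ZC k)) \<notin> Ls g"
proof
  assume a: "MeasX u (MAnc r (ZC k)) \<in> Ls g"
  then have h: "g = Suc (r * P + measT S (ZC k)) \<and> r < R \<and> ZC k \<in> checks C" using label_MAnc by blast
  then have tP: "measT S (ZC k) < P" using vc by blast
  have "Ls g = round_layer C S r (measT S (ZC k))" using h Ls_round[OF _ tP] by simp
  then show False using a by (simp add: rl_MeasX)
qed

lemma noZflip: "fst F = (\<lambda>_. False) \<Longrightarrow> \<not> propagate Ls g n F (MAnc r (ZC k))"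
proof (induction n arbitrary: g F)
  case 0 then show ?case by simp
next
  case (Suc n)
  have "\<not> layer_flips (Ls g) F (MAnc r (ZC k))"
    unfolding flips_par using Suc.prems noMeasX_Z by simp
  moreover have "\<not> propagate Ls (Suc g) n (layer_apply (Ls g) F) (MAnc r (ZC k))"
    using Suc.IH apX_empty[OF Suc.prems] by blast
  ultimately show ?case by simp
qed

lemma no_flip_early: assumes "Suc ((R-1)*P) < g" "r \<noteq> R - 1"
  shows "\<not> propagate Ls g n F (MAnc r c)"
proof
  assume "propagate Ls g n F (MAnc r c)"
  from prop_labels[OF this] obtain g' u where g': "g \<le> g'" "MeasZ u (MAnc r c) \<in> Ls g' \<or> MeasX u (MAnc r c) \<in> Ls g'" by blast
  then have h: "g' = Suc (r * P + measT S c)" "r < R" "c \<in> checks C" using label_MAnc by blast+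
  have "r < R - 1" using h(2) assms(2) by simp
  then have "Suc r \<le> R - 1" by simp
  then have "Suc r * P \<le> (R-1) * P" by (rule mult_right_mono) simp
  moreover have "measT S c < P" using vc h(3) by blast
  ultimately have "r * P + measT S c < (R-1)*P" by simp
  then show False using g' h assms(1) by simp
qed

definition XbZ where "XbZ \<longleftrightarrow> (\<forall>i<mx C. \<forall>k<mz C. \<forall>q \<in> supp C (XC i) \<inter> supp C (ZC k).
         cnT S (XC i) q < cnT S (ZC k) q)"
definition ZbX where "ZbX \<longleftrightarrow> (\<forall>i<mx C. \<forall>k<mz C. \<forall>q \<in> supp C (XC i) \<inter> supp C (ZC k).
         cnT S (ZC k) q < cnT S (XC i) q)"

text \<open>Data fault of case 2: Z on data qubit q at local time 0 of the last round.\<close>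

lemma eff_d2_MData: assumes P2: "2 \<le> P" and q': "q' < nq C"
  shows "mech_effect Ls N (Suc ((R-1)*P), Idle (Data q), PauliF {} {Data q}) (MData q') = (q' = q)"
proof -
  have "Suc ((R-1)*P) \<le> R*P"
  proof -
    have "Suc ((R-1)*P) \<le> (R-1)*P + P" using P2 by simp
    also have "\<dots> = R * P" using R1 by (metis Suc_diff_1 less_le_trans mult_Suc zero_less_one add.commute)
    finally show ?thesis .
  qed
  then show ?thesis using eff_Pauli[of "Suc ((R-1)*P)" q' "Idle (Data q)" "{}" "{Data q}"] q' by simp
qed

lemma eff_d2_MAncX: assumes P2: "2 \<le> P" and i: "i < mx C"
  shows "mech_effect Ls N (Suc ((R-1)*P), Idle (Data q), PauliF {} {Data q}) (MAnc (R-1) (XC i)) =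
         (q \<in> supp C (XC i))"
proof -
  have r: "R - 1 < R" using R1 by simp
  have t: "1 \<le> measT S (XC i)" using vc[of "XC i"] i by simp
  have "mech_effect Ls N (Suc ((R-1)*P), Idle (Data q), PauliF {} {Data q}) (MAnc (R-1) (XC i)) =
        propagate Ls (Suc ((R-1)*P + 1)) (N - Suc ((R-1)*P + 1)) ((\<lambda>u. u \<in> {}), (\<lambda>u. u \<in> {Data q})) (MAnc (R-1) (XC i))"
    by simp
  also have "\<dots> = Mform 1 (\<lambda>u. u \<in> {Data q}) i" using M[OF i r t] by simp
  also have "\<dots> = (q \<in> supp C (XC i))"
  proof -
    have "1 \<le> cnT S (XC i) q" if "q \<in> supp C (XC i)" using vcq[of "XC i" q] i that by simp
    then have e1: "{q' \<in> supp C (XC i). 1 \<le> cnT S (XC i) q' \<and> Data q' \<in> {Data q}} = (if q \<in> supp C (XC i) then {q} else {})"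
      by auto
    have e2: "Pi 1 (\<lambda>u. u \<in> {Data q}) i = {}" by (simp add: Pi_def)
    show ?thesis unfolding Mform_def e2 e1 by (simp add: par_def)
  qed
  finally show ?thesis .
qed

lemma data2_in_mechs: assumes P2: "2 \<le> P" and q: "q < nq C"
  shows "(Suc ((R-1)*P), Idle (Data q), PauliF {} {Data q}) \<in> mechs Ls N"
proof -
  have r: "R - 1 < R" using R1 by simp
  have L: "Ls (Suc ((R-1)*P + 0)) = round_layer C S (R-1) 0" using Ls_round[OF r, of 0] P2 by simp
  have "Idle (Data q) \<in> round_layer C S (R-1) 0"
  proof -
    have "\<forall>c \<in> checks C. q \<in> supp C c \<longrightarrow> cnT S c q \<noteq> 0" using vcq by fastforce
    then show ?thesis using q unfolding round_layer_def by blast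
  qed
  moreover have "Suc ((R-1)*P) < N" using R1 by (simp add: N_eq) (metis Suc_diff_1 le_add2 less_Suc_eq_le mult_le_mono1 diff_le_self less_le_trans)
  ultimately show ?thesis using L by (simp add: mechs_def del: One_nat_def)
qed

lemma last_round_le: "t < P \<Longrightarrow> Suc ((R-1)*P + t) \<le> R*P"
  using rt_bound[of "R-1" t] R1 by simp

lemma resid_in_mechs: assumes k: "k < mz C" and q: "q \<in> supp C (ZC k)"
  shows "(Suc ((R-1)*P + cnT S (ZC k) q), CNOT (Data q) (Anc (ZC k)), PauliF {} {Data q, Anc (ZC k)}) \<in> mechs Ls N"
proof -
  have tP: "cnT S (ZC k) q < P" using vcq[of "ZC k" q] vc[of "ZC k"] k q by simp
  have r: "R - 1 < R" using R1 by simp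
  have L: "Ls (Suc ((R-1)*P + cnT S (ZC k) q)) = round_layer C S (R-1) (cnT S (ZC k) q)"
    using Ls_round[OF r tP] .
  have "CNOT (Data q) (Anc (ZC k)) \<in> round_layer C S (R-1) (cnT S (ZC k) q)"
    unfolding rl_CNOT using k q by blast
  moreover have "Suc ((R-1)*P + cnT S (ZC k) q) < N" using last_round_le[OF tP] by (simp add: N_eq)
  ultimately show ?thesis using L by (auto simp: mechs_def)
qed

lemma effR_MData: assumes k: "k < mz C" and q: "q \<in> supp C (ZC k)" and q': "q' < nq C"
  shows "mech_effect Ls N (Suc ((R-1)*P + cnT S (ZC k) q), CNOT (Data q) (Anc (ZC k)), PauliF {} {Data q, Anc (ZC k)}) (MData q') =
         (q' \<in> resid_set C S (ZC k, q))"
proof -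
  let ?t0 = "cnT S (ZC k) q"
  have tP: "?t0 < P" using vcq[of "ZC k" q] vc[of "ZC k"] k q by simp
  have pt: "prepT S (ZC k) < ?t0" using vcq[of "ZC k" q] k q by simp
  have r: "R - 1 < R" using R1 by simp
  have gl: "Suc ((R-1)*P + ?t0) \<le> R*P" by (rule last_round_le[OF tP])
  have Z1: "\<forall>k'. Anc (ZC k') \<in> {Data q, Anc (ZC k)} \<longrightarrow> k' = k" by simp
  have "mech_effect Ls N (Suc ((R-1)*P + ?t0), CNOT (Data q) (Anc (ZC k)), PauliF {} {Data q, Anc (ZC k)}) (MData q') =
    ((q' = q) \<noteq> (q' \<in> supp C (ZC k) \<and> pend (Suc (Suc ((R-1)*P + ?t0))) k q'))"
    unfolding eff_Pauli[OF gl q'] par_K1[OF Z1] using k by simp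
  also have "\<dots> = ((q' = q) \<noteq> (q' \<in> supp C (ZC k) \<and> Suc ?t0 \<le> cnT S (ZC k) q'))"
    using pend_next[OF r tP k] pt by auto
  also have "\<dots> = (q' \<in> resid_set C S (ZC k, q))"
  proof (cases "q' = q")
    case True then show ?thesis using q by (simp add: resid_set_def)
  next
    case False
    have "q' \<in> supp C (ZC k) \<Longrightarrow> cnT S (ZC k) q' \<noteq> ?t0"
      using vinj[of "ZC k"] k q False by (auto dest: inj_onD)
    then show ?thesis using False by (auto simp: resid_set_def)
  qed
  finally show ?thesis .
qed

lemma effR_MAncX: assumes k: "k < mz C" and q: "q \<in> supp C (ZC k)" and i: "i < mx C"
  shows "XbZ \<Longrightarrow> \<not> mech_effect Ls N (Suc ((R-1)*P + cnT S (ZC k) q), CNOT (Data q) (Anc (ZC k)), PauliF {} {Data q, Anc (ZC k)}) (MAnc (R-1) (XC i))"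
    and "ZbX \<Longrightarrow> mech_effect Ls N (Suc ((R-1)*P + cnT S (ZC k) q), CNOT (Data q) (Anc (ZC k)), PauliF {} {Data q, Anc (ZC k)}) (MAnc (R-1) (XC i))
           = par {q' \<in> supp C (XC i). q' \<in> resid_set C S (ZC k, q)}"
proof -
  let ?t0 = "cnT S (ZC k) q"
  let ?Z = "\<lambda>u. u \<in> {Data q, Anc (ZC k)}"
  let ?eff = "mech_effect Ls N (Suc ((R-1)*P + cnT S (ZC k) q), CNOT (Data q) (Anc (ZC k)), PauliF {} {Data q, Anc (ZC k)}) (MAnc (R-1) (XC i))"
  have tP: "?t0 < P" using vcq[of "ZC k" q] vc[of "ZC k"] k q by simp
  have pt: "prepT S (ZC k) < ?t0" using vcq[of "ZC k" q] k q by simp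
  have r: "R - 1 < R" using R1 by simp
  have effe: "?eff = propagate Ls (Suc ((R-1)*P + Suc ?t0)) (N - Suc ((R-1)*P + Suc ?t0)) ((\<lambda>u. u \<in> {}), ?Z) (MAnc (R-1) (XC i))"
    by simp
  have supp_i_lt: "cnT S (XC i) q' < measT S (XC i)" if "q' \<in> supp C (XC i)" for q'
    using vcq[of "XC i" q'] i that by simp
  {
    assume late: "\<not> Suc ?t0 \<le> measT S (XC i)"
    have "\<not> ?eff" unfolding effe by (rule no_flip_MAnc) (use late in simp)
    note late_res = this
  } note late_case = this
  {
    assume early: "Suc ?t0 \<le> measT S (XC i)"
    have "?eff = Mform (Suc ?t0) ?Z i" unfolding effe using M[OF i r early] by simp
  } note early_case = this
  show "XbZ \<Longrightarrow> \<not> ?eff"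
  proof -
    assume xz: XbZ
    show "\<not> ?eff"
    proof (cases "Suc ?t0 \<le> measT S (XC i)")
      case False then show ?thesis using late_case by blast
    next
      case True
      have "q \<in> supp C (XC i) \<Longrightarrow> cnT S (XC i) q < ?t0" using xz i k q unfolding XbZ_def by blast
      then have e1: "{q' \<in> supp C (XC i). Suc ?t0 \<le> cnT S (XC i) q' \<and> ?Z (Data q')} = {}"
        by auto
      have e2: "Pi (Suc ?t0) ?Z i = {}"
      proof (intro set_eqI iffI)
        fix x assume "x \<in> Pi (Suc ?t0) ?Z i"
        then obtain q' k' where x: "x = (q', k')" "k' < mz C" "q' \<in> supp C (XC i)" "q' \<in> supp C (ZC k')"
          "cnT S (ZC k') q' < cnT S (XC i) q'" by (auto simp: Pi_def)
        have "cnT S (XC i) q' < cnT S (ZC k') q'" using xz i x unfolding XbZ_def by blast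
        then show "x \<in> {}" using x by simp
      qed simp
      show ?thesis using early_case[OF True] unfolding Mform_def e1 e2 by simp
    qed
  qed
  show "ZbX \<Longrightarrow> ?eff = par {q' \<in> supp C (XC i). q' \<in> resid_set C S (ZC k, q)}"
  proof -
    assume zx: ZbX
    show ?thesis
    proof (cases "Suc ?t0 \<le> measT S (XC i)")
      case False
      have emp: "{q' \<in> supp C (XC i). q' \<in> resid_set C S (ZC k, q)} = {}"
      proof (intro set_eqI iffI)
        fix q' assume a: "q' \<in> {q' \<in> supp C (XC i). q' \<in> resid_set C S (ZC k, q)}"
        then have "q' \<in> supp C (ZC k)" "?t0 \<le> cnT S (ZC k) q'" "q' \<in> supp C (XC i)" by (auto simp: resid_set_def)
        then have "cnT S (ZC k) q' < cnT S (XC i) q'" using zx i k unfolding ZbX_def by blast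
        then show "q' \<in> {}" using supp_i_lt[OF \<open>q' \<in> supp C (XC i)\<close>] \<open>?t0 \<le> cnT S (ZC k) q'\<close> False by simp
      qed simp
      show ?thesis unfolding emp using late_case[OF False] by simp
    next
      case True
      define B where "B = {q' \<in> supp C (XC i). q' \<in> supp C (ZC k) \<and> ?t0 < cnT S (ZC k) q'}"
      have "q \<in> supp C (XC i) \<Longrightarrow> ?t0 < cnT S (XC i) q" using zx i k q unfolding ZbX_def by blast
      then have e1: "{q' \<in> supp C (XC i). Suc ?t0 \<le> cnT S (XC i) q' \<and> ?Z (Data q')} =
                (if q \<in> supp C (XC i) then {q} else {})"
        by auto
      have e2: "Pi (Suc ?t0) ?Z i = (\<lambda>q'. (q', k)) ` B"
      proof (intro set_eqI iffI)
        fix x assume "x \<in> Pi (Suc ?t0) ?Z i"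
        then show "x \<in> (\<lambda>q'. (q', k)) ` B" by (auto simp: Pi_def B_def)
      next
        fix x assume "x \<in> (\<lambda>q'. (q', k)) ` B"
        then obtain q' where x: "x = (q', k)" "q' \<in> supp C (XC i)" "q' \<in> supp C (ZC k)" "?t0 < cnT S (ZC k) q'"
          by (auto simp: B_def)
        have "cnT S (ZC k) q' < cnT S (XC i) q'" using zx i k x unfolding ZbX_def by blast
        then show "x \<in> Pi (Suc ?t0) ?Z i" using x k pt by (auto simp: Pi_def)
      qed
      have pB: "par (Pi (Suc ?t0) ?Z i) = par B" unfolding e2 by (rule par_image) (auto simp: inj_on_def)
      have split: "{q' \<in> supp C (XC i). q' \<in> resid_set C S (ZC k, q)} =
                   (if q \<in> supp C (XC i) then {q} else {}) \<union> B"
      proof -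
        have "q' \<in> supp C (ZC k) \<Longrightarrow> q' \<noteq> q \<Longrightarrow> cnT S (ZC k) q' \<noteq> ?t0" for q'
          using vinj[of "ZC k"] k q by (auto dest: inj_onD)
        then have lt: "q' \<in> supp C (ZC k) \<Longrightarrow> q' \<noteq> q \<Longrightarrow> ?t0 \<le> cnT S (ZC k) q' \<Longrightarrow> ?t0 < cnT S (ZC k) q'" for q'
          by force
        show ?thesis
        proof (intro set_eqI iffI)
          fix x assume "x \<in> {q' \<in> supp C (XC i). q' \<in> resid_set C S (ZC k, q)}"
          then show "x \<in> (if q \<in> supp C (XC i) then {q} else {}) \<union> B"
            using lt[of x] by (cases "x = q") (auto simp: resid_set_def B_def)
        next
          fix x assume "x \<in> (if q \<in> supp C (XC i) then {q} else {}) \<union> B"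
          then show "x \<in> {q' \<in> supp C (XC i). q' \<in> resid_set C S (ZC k, q)}"
            using q by (cases "q \<in> supp C (XC i)") (auto simp: resid_set_def B_def)
        qed
      qed
      have dj: "(if q \<in> supp C (XC i) then {q} else {}) \<inter> B = {}" by (auto simp: B_def)
      have finB: "finite B" by (simp add: B_def)
      have "?eff = (par (if q \<in> supp C (XC i) then {q} else {}) \<noteq> par B)"
        using early_case[OF True] unfolding Mform_def e1 pB by simp
      also have "\<dots> = par {q' \<in> supp C (XC i). q' \<in> resid_set C S (ZC k, q)}"
        unfolding split by (rule par_Un[symmetric]) (use finB dj in auto)
      finally show ?thesis .
    qed
  qed
qed

end

context memc begin

fun opof :: "bool \<Rightarrow> nat + (chk \<times> nat) \<Rightarrow> op" where
  "opof b (Inl q) = (if b then MeasX (Data q) (MData q) else Idle (Data q))"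
| "opof b (Inr (c, q)) = CNOT (Data q) (Anc c)"

fun phi :: "bool \<Rightarrow> nat + (chk \<times> nat) \<Rightarrow> mech" where
  "phi b (Inl q) = (if b then (Suc (R*P), MeasX (Data q) (MData q), FlipF)
                    else (Suc ((R-1)*P), Idle (Data q), PauliF {} {Data q}))"
| "phi b (Inr (c, q)) = (Suc ((R-1)*P + cnT S c q), CNOT (Data q) (Anc c), PauliF {} {Data q, Anc c})"

lemma residZ: assumes "rr \<in> resid_idx C S False"
  obtains k q where "rr = (ZC k, q)" "k < mz C" "q \<in> supp C (ZC k)"
proof -
  obtain c q where rr: "rr = (c, q)" "c \<in> checks C" "\<not> isX c" "q \<in> supp C c"
    using assms by (auto simp: resid_idx_def)
  then obtain k where "c = ZC k" by (cases c) auto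
  then show ?thesis using rr that by auto
qed

lemma allowed_Inr: "Inr rr \<in> allowed \<Longrightarrow> rr \<in> resid_idx C S False"
  by (auto simp: allowed_def)

lemma opof_inj: "opof b x = opof b y \<Longrightarrow> x = y"
  by (cases x; cases y; cases b) (auto split: if_splits)

lemma phi_op: "fst (snd (phi b x)) = opof b x"
  by (cases x) auto

lemma ext_col_row: "ext_col H E i = ext_col (\<lambda>_. H i) E j"
  by (intro ext, case_tac x) auto

lemma P2: "\<not> XbZ \<Longrightarrow> 2 \<le> P"
proof -
  assume "\<not> XbZ"
  then obtain i where "i < mx C" unfolding XbZ_def by blast
  then show ?thesis using vc[of "XC i"] by simp
qed

lemma phi_mechs: assumes "c \<in> allowed" "XbZ \<or> ZbX" shows "phi XbZ c \<in> mechs Ls N"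
proof (cases c)
  case (Inl q)
  then have q: "q < nq C" using assms by (auto simp: allowed_def)
  show ?thesis
  proof (cases XbZ)
    case True
    have "MeasX (Data q) (MData q) \<in> Ls (Suc (R*P))" using q unfolding Ls_final by blast
    moreover have "Suc (R*P) < N" by (simp add: N_eq)
    ultimately show ?thesis using Inl True by (simp add: mechs_def)
  next
    case False
    then show ?thesis using data2_in_mechs[OF P2[OF False] q] Inl by simp
  qed
next
  case (Inr rr)
  then obtain k q where rr: "rr = (ZC k, q)" "k < mz C" "q \<in> supp C (ZC k)" using assms
    using residZ[OF allowed_Inr] by metis
  then show ?thesis using resid_in_mechs[OF rr(2) rr(3)] Inr by simp
qed

lemma phi_MData: assumes "c \<in> allowed" "q' < nq C"
  shows "mech_effect Ls N (phi XbZ c) (MData q') = (q' \<in> colset c)"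
proof (cases c)
  case (Inl q)
  show ?thesis
  proof (cases XbZ)
    case True then show ?thesis using Inl by auto
  next
    case False then show ?thesis using Inl eff_d2_MData[OF P2[OF False] assms(2)] by simp
  qed
next
  case (Inr rr)
  then obtain k q where rr: "rr = (ZC k, q)" "k < mz C" "q \<in> supp C (ZC k)" using assms
    using residZ[OF allowed_Inr] by metis
  then show ?thesis using effR_MData[OF rr(2) rr(3) assms(2)] Inr by simp
qed

lemma phi_MAncZ: "c \<in> allowed \<Longrightarrow> \<not> mech_effect Ls N (phi b c) (MAnc r (ZC k))"
proof (cases c)
  case (Inl q) then show ?thesis by (cases b) (auto intro!: noZflip)
next
  case (Inr rr) then show ?thesis by (cases rr) (auto intro!: noZflip)
qed

lemma phi_MAnc_early: assumes r: "r \<noteq> R - 1" shows "\<not> mech_effect Ls N (phi b c) (MAnc r c')"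
proof (cases c)
  case (Inl q)
  have "\<not> propagate Ls (Suc (Suc ((R-1)*P))) n F (MAnc r c')" for n F
    by (rule no_flip_early) (use r in auto)
  then show ?thesis using Inl by (cases b) auto
next
  case (Inr rr)
  obtain a b where ab: "rr = (a, b)" by (cases rr)
  have "\<not> propagate Ls (Suc (Suc ((R-1)*P + cnT S a b))) n F (MAnc r c')" for n F
    by (rule no_flip_early) (use r in auto)
  then show ?thesis using Inr ab by auto
qed

lemma phi_MAncX: assumes c: "c \<in> allowed" and i: "i < mx C"
  shows "XbZ \<Longrightarrow> \<not> mech_effect Ls N (phi XbZ c) (MAnc (R-1) (XC i))"
    and "\<not> XbZ \<Longrightarrow> ZbX \<Longrightarrow> mech_effect Ls N (phi XbZ c) (MAnc (R-1) (XC i)) = ext_col (hx C) (resid_set C S) i c"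
proof -
  assume xz: XbZ
  show "\<not> mech_effect Ls N (phi XbZ c) (MAnc (R-1) (XC i))"
  proof (cases c)
    case (Inl q) then show ?thesis using xz by simp
  next
    case (Inr rr)
    then obtain k q where rr: "rr = (ZC k, q)" "k < mz C" "q \<in> supp C (ZC k)" using c
      using residZ[OF allowed_Inr] by metis
    then show ?thesis using effR_MAncX(1)[OF rr(2) rr(3) i xz] Inr by simp
  qed
next
  assume nxz: "\<not> XbZ" and zx: ZbX
  have colp: "par {q' \<in> supp C (XC i). q' \<in> colset c} = ext_col (hx C) (resid_set C S) i c"
    using colset_par[OF c, of "hx C i" i] by (simp add: supp_X ext_col_row[of "hx C" _ i i])
  show "mech_effect Ls N (phi XbZ c) (MAnc (R-1) (XC i)) = ext_col (hx C) (resid_set C S) i c"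
  proof (cases c)
    case (Inl q)
    then have q: "q < nq C" using c by (auto simp: allowed_def)
    have "mech_effect Ls N (phi XbZ c) (MAnc (R-1) (XC i)) = (q \<in> supp C (XC i))"
      using eff_d2_MAncX[OF P2[OF nxz] i, of q] Inl nxz by simp
    then show ?thesis using Inl q by (simp add: supp_X)
  next
    case (Inr rr)
    then obtain k q where rr: "rr = (ZC k, q)" "k < mz C" "q \<in> supp C (ZC k)" using c
      using residZ[OF allowed_Inr] by metis
    then show ?thesis using effR_MAncX(2)[OF rr(2) rr(3) i zx] Inr colp by simp
  qed
qed

lemma gp_eq: "(\<lambda>(g, p, e). (g, p)) z = (fst z, fst (snd z))" by (cases z) auto

lemma colset_row: "c \<in> allowed \<Longrightarrow> par {q \<in> {q. q < nq C \<and> M q}. q \<in> colset c} = ext_col (\<lambda>_. M) (resid_set C S) j c"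
  by (rule colset_par)

lemma upper: assumes X: "finite X" "X \<subseteq> allowed"
  and H: "\<forall>i<mx C. even (card {c\<in>X. ext_col (hx C) (resid_set C S) i c})"
  and L: "\<exists>l<kx C. odd (card {c\<in>X. ext_col (lx C) (resid_set C S) l c})"
  and NI: "XbZ \<or> ZbX"
  shows "circ_dist_basis C S R BX \<le> enat (card X)"
proof -
  let ?b = XbZ
  define F where "F = phi ?b ` X"
  have injphi: "inj_on (phi ?b) X"
    by (rule inj_onI) (metis phi_op opof_inj)
  have cardF: "card F = card X" unfolding F_def by (rule card_image[OF injphi])
  have finF: "finite F" unfolding F_def using X(1) by simp
  have mechF: "F \<subseteq> mechs Ls N" unfolding F_def using phi_mechs X(2) NI by blast
  have injF: "inj_on (\<lambda>(g, p, e). (g, p)) F"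
  proof (rule inj_onI)
    fix f1 f2 assume "f1 \<in> F" "f2 \<in> F" and e: "(\<lambda>(g, p, e). (g, p)) f1 = (\<lambda>(g, p, e). (g, p)) f2"
    then obtain x y where xy: "f1 = phi ?b x" "f2 = phi ?b y" by (auto simp: F_def)
    then have "opof ?b x = opof ?b y" using e by (simp add: gp_eq phi_op[symmetric])
    then have "x = y" by (rule opof_inj)
    then show "f1 = f2" using xy by simp
  qed
  have T: "total_flips Ls N F m = par {c\<in>X. mech_effect Ls N (phi ?b c) m}" for m
  proof -
    have "{f\<in>F. mech_effect Ls N f m} = phi ?b ` {c\<in>X. mech_effect Ls N (phi ?b c) m}"
      unfolding F_def by auto
    moreover have "inj_on (phi ?b) {c\<in>X. mech_effect Ls N (phi ?b c) m}"
      using injphi by (rule inj_on_subset) auto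
    ultimately show ?thesis by (simp add: total_flips_def par_def card_image)
  qed
  have TA: "\<not> total_flips Ls N F (MAnc r c')" if c': "c' \<in> checks C" for r c'
  proof (cases c')
    case (ZC k)
    have e0: "{c\<in>X. mech_effect Ls N (phi ?b c) (MAnc r (ZC k))} = {}" using phi_MAncZ X(2) by auto
    show ?thesis unfolding T ZC e0 by simp
  next
    case (XC i)
    then have i: "i < mx C" using c' by simp
    show ?thesis
    proof (cases "r = R - 1")
      case False
      have e0: "{c\<in>X. mech_effect Ls N (phi ?b c) (MAnc r c')} = {}" using phi_MAnc_early[OF False] by auto
      show ?thesis unfolding T e0 by simp
    next
      case True
      show ?thesis
      proof (cases ?b)
        case True
        have e0: "{c\<in>X. mech_effect Ls N (phi ?b c) (MAnc (R-1) (XC i))} = {}" using phi_MAncX(1)[OF _ i True] X(2) by auto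
        show ?thesis unfolding T XC \<open>r = R - 1\<close> e0 by simp
      next
        case False
        then have zx: ZbX using NI by simp
        have e0: "{c\<in>X. mech_effect Ls N (phi ?b c) (MAnc (R-1) (XC i))} = {c\<in>X. ext_col (hx C) (resid_set C S) i c}"
          using phi_MAncX(2)[OF _ i False zx] X(2) by auto
        show ?thesis unfolding T XC \<open>r = R - 1\<close> e0 using H i by (simp add: par_def)
      qed
    qed
  qed
  have TD: "total_flips Ls N F (MData q) = par {c\<in>X. q \<in> colset c}" if "q < nq C" for q
  proof -
    have e0: "{c\<in>X. mech_effect Ls N (phi ?b c) (MData q)} = {c\<in>X. q \<in> colset c}"
      using phi_MData[OF _ that] X(2) by auto
    show ?thesis unfolding T e0 by simp
  qed
  have rowpar: "par {q \<in> {q. q < nq C \<and> M q}. total_flips Ls N F (MData q)} =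
                par {c\<in>X. ext_col (\<lambda>_. M) (resid_set C S) j c}" for M j
  proof -
    have "par {q \<in> {q. q < nq C \<and> M q}. total_flips Ls N F (MData q)} =
          par {q \<in> {q. q < nq C \<and> M q}. par {c\<in>X. q \<in> colset c}}"
      using TD by (intro arg_cong[where f=par]) auto
    also have "\<dots> = par {c\<in>X. par {q \<in> {q. q < nq C \<and> M q}. q \<in> colset c}}"
      by (rule par_swap[symmetric]) (use X(1) in auto)
    also have "\<dots> = par {c\<in>X. ext_col (\<lambda>_. M) (resid_set C S) j c}"
      using colset_row X(2) by (intro arg_cong[where f=par]) auto
    finally show ?thesis .
  qed
  have Det: "\<forall>D\<in>detectors C BX R. even (card {m\<in>D. total_flips Ls N F m})"
  proof
    fix D assume "D \<in> detectors C BX R"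
    then consider (a) i where "i < mx C" "D = {MAnc 0 (XC i)}"
      | (b) r c where "c \<in> checks C" "D = {MAnc (r - 1) c, MAnc r c}"
      | (c) i where "i < mx C" "D = insert (MAnc (R - 1) (XC i)) (MData ` supp C (XC i))"
      unfolding detectors_def by auto
    then show "even (card {m\<in>D. total_flips Ls N F m})"
    proof cases
      case a
      then have e0: "{m\<in>D. total_flips Ls N F m} = {}" using TA[of "XC i"] by auto
      show ?thesis unfolding e0 by simp
    next
      case b
      then have e0: "{m\<in>D. total_flips Ls N F m} = {}" using TA[of c] by auto
      show ?thesis unfolding e0 by simp
    next
      case c
      have e: "{m\<in>D. total_flips Ls N F m} = MData ` {q \<in> {q. q < nq C \<and> hx C i q}. total_flips Ls N F (MData q)}"
        using c TA[of "XC i" "R - 1"] by (auto simp: supp_X)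
      have "par {q \<in> {q. q < nq C \<and> hx C i q}. total_flips Ls N F (MData q)} =
            par {c\<in>X. ext_col (hx C) (resid_set C S) i c}"
        using rowpar[of "hx C i" i] by (simp add: ext_col_row[of "hx C" _ i i])
      also have "\<dots> = False" using H c(1) by (simp add: par_def)
      finally show ?thesis unfolding e by (simp add: par_def card_image inj_on_def)
    qed
  qed
  have Obs: "\<exists>Ob\<in>observables C BX. odd (card {m\<in>Ob. total_flips Ls N F m})"
  proof -
    obtain l where l: "l < kx C" "odd (card {c\<in>X. ext_col (lx C) (resid_set C S) l c})" using L by blast
    let ?Ob = "MData ` {q. q < nq C \<and> lx C l q}"
    have inO: "?Ob \<in> observables C BX" using l(1) by auto
    have e: "{m\<in>?Ob. total_flips Ls N F m} = MData ` {q \<in> {q. q < nq C \<and> lx C l q}. total_flips Ls N F (MData q)}"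
      by auto
    have "par {q \<in> {q. q < nq C \<and> lx C l q}. total_flips Ls N F (MData q)} =
          par {c\<in>X. ext_col (lx C) (resid_set C S) l c}"
      using rowpar[of "lx C l" l] by (simp add: ext_col_row[of "lx C" _ l l])
    then have "odd (card {m\<in>?Ob. total_flips Ls N F m})" unfolding e using l(2)
      by (simp add: par_def card_image inj_on_def)
    then show ?thesis using inO by blast
  qed
  have "F \<in> {F. finite F \<and> F \<subseteq> mechs Ls N \<and> inj_on (\<lambda>(g, p, e). (g, p)) F \<and>
           (\<forall>D \<in> detectors C BX R. even (card {m \<in> D. total_flips Ls N F m})) \<and>
           (\<exists>Ob \<in> observables C BX. odd (card {m \<in> Ob. total_flips Ls N F m}))}"
    using finF mechF injF Det Obs by blast
  then have "circ_dist_basis C S R BX \<le> enat (card F)"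
    unfolding circ_dist_basis_def circuit_distance_def by (intro Inf_lower) (rule imageI)
  then show ?thesis using cardF by simp
qed

end

context memc begin

lemma BX_eq: assumes NI: "non_interleaved C S"
  shows "circ_dist_basis C S R BX = ext_dist_Z C S (resid_idx C S False)"
proof (rule antisym)
  have NI': "XbZ \<or> ZbX" using NI unfolding non_interleaved_def XbZ_def ZbX_def .
  show "circ_dist_basis C S R BX \<le> ext_dist_Z C S (resid_idx C S False)"
    unfolding ext_dist_Z_def ext_dist_def
  proof (rule Inf_greatest)
    fix y assume "y \<in> (\<lambda>X. enat (card X)) ` {X. finite X \<and> X \<subseteq> Inl ` {..<nq C} \<union> Inr ` resid_idx C S False \<and>
           (\<forall>i<mx C. even (card {c \<in> X. ext_col (hx C) (resid_set C S) i c})) \<and>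
           (\<exists>l<kx C. odd (card {c \<in> X. ext_col (lx C) (resid_set C S) l c}))}"
    then obtain X where X: "y = enat (card X)" "finite X" "X \<subseteq> allowed"
      "\<forall>i<mx C. even (card {c \<in> X. ext_col (hx C) (resid_set C S) i c})"
      "\<exists>l<kx C. odd (card {c \<in> X. ext_col (lx C) (resid_set C S) l c})"
      by (auto simp: allowed_def)
    show "circ_dist_basis C S R BX \<le> y" using upper[OF X(2) X(3) X(4) X(5) NI'] X(1) by simp
  qed
  show "ext_dist_Z C S (resid_idx C S False) \<le> circ_dist_basis C S R BX"
    unfolding circ_dist_basis_def circuit_distance_def
  proof (rule Inf_greatest)
    fix y assume "y \<in> (\<lambda>F. enat (card F)) ` {F. finite F \<and> F \<subseteq> mechs Ls N \<and> inj_on (\<lambda>(g, p, e). (g, p)) F \<and>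
           (\<forall>D \<in> detectors C BX R. even (card {m \<in> D. total_flips Ls N F m})) \<and>
           (\<exists>Ob \<in> observables C BX. odd (card {m \<in> Ob. total_flips Ls N F m}))}"
    then obtain F where F: "y = enat (card F)" "finite F" "F \<subseteq> mechs Ls N"
      "\<forall>D \<in> detectors C BX R. even (card {m \<in> D. total_flips Ls N F m})"
      "\<exists>Ob \<in> observables C BX. odd (card {m \<in> Ob. total_flips Ls N F m})"
      by auto
    show "ext_dist_Z C S (resid_idx C S False) \<le> y" using lower[OF F(2) F(3) F(4) F(5)] F(1) by simp
  qed
qed

end

lemma ext_mono: "R1 \<subseteq> R2 \<Longrightarrow> ext_dist n H m L k E R2 \<le> ext_dist n H m L k E R1"
  unfolding ext_dist_def by (rule Inf_superset_mono) (auto, blast)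

fun swc :: "chk \<Rightarrow> chk" where "swc (XC i) = ZC i" | "swc (ZC k) = XC k"
fun swq :: "qubit \<Rightarrow> qubit" where "swq (Data q) = Data q" | "swq (Anc c) = Anc (swc c)"
fun swm :: "meas \<Rightarrow> meas" where "swm (MAnc r c) = MAnc r (swc c)" | "swm (MData q) = MData q"
fun swop :: "op \<Rightarrow> op" where
  "swop (PrepZ u) = PrepX (swq u)" | "swop (PrepX u) = PrepZ (swq u)"
| "swop (MeasZ u m) = MeasX (swq u) (swm m)" | "swop (MeasX u m) = MeasZ (swq u) (swm m)"
| "swop (CNOT a b) = CNOT (swq b) (swq a)" | "swop (Idle u) = Idle (swq u)"
fun swe :: "fkind \<Rightarrow> fkind" where
  "swe (PauliF X Z) = PauliF (swq ` Z) (swq ` X)" | "swe FlipF = FlipF"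
definition swmech :: "mech \<Rightarrow> mech" where "swmech = (\<lambda>(g, p, e). (g, swop p, swe e))"
definition swf :: "frame \<Rightarrow> frame" where "swf F = (snd F \<circ> swq, fst F \<circ> swq)"

lemma swc_swc[simp]: "swc (swc c) = c" by (cases c) auto
lemma swq_swq[simp]: "swq (swq u) = u" by (cases u) auto
lemma swm_swm[simp]: "swm (swm m) = m" by (cases m) auto
lemma swop_swop[simp]: "swop (swop p) = p" by (cases p) auto
lemma swq_img_img[simp]: "swq ` swq ` Z = Z" by (force simp: image_image)
lemma swe_swe[simp]: "swe (swe e) = e" by (cases e) auto
lemma swmech_swmech[simp]: "swmech (swmech f) = f" by (cases f) (auto simp: swmech_def)
lemma inj_swq: "inj_on swq A" by (metis inj_onI swq_swq)
lemma inj_swm: "inj_on swm A" by (metis inj_onI swm_swm)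
lemma inj_swmech: "inj_on swmech A" by (metis inj_onI swmech_swmech)
lemma swq_eq_iff[simp]: "swq a = swq b \<longleftrightarrow> a = b" by (metis swq_swq)
lemma swm_eq_iff[simp]: "swm a = swm b \<longleftrightarrow> a = b" by (metis swm_swm)
lemma swop_eq_iff[simp]: "swop a = swop b \<longleftrightarrow> a = b" by (metis swop_swop)
lemma swc_inj[simp]: "swc a = swc b \<longleftrightarrow> a = b" by (metis swc_swc)
lemma swc_eq_iff: "swc a = b \<longleftrightarrow> a = swc b" by (metis swc_swc)
lemma swm_eq_MAnc[simp]: "swm m = MAnc r c \<longleftrightarrow> m = MAnc r (swc c)"
  by (cases m) (auto simp: swc_eq_iff)
lemma swm_eq_MData[simp]: "swm m = MData q \<longleftrightarrow> m = MData q"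
  by (cases m) auto
lemma isX_swc[simp]: "isX (swc c) = (\<not> isX c)" by (cases c) auto

lemma mem_swop: "p \<in> swop ` L \<longleftrightarrow> swop p \<in> L"
  by (metis image_iff swop_swop)

definition dualC :: "css \<Rightarrow> css" where
  "dualC C = C\<lparr>mx := mz C, hx := hz C, mz := mx C, hz := hx C, kx := kz C, lx := lz C, kz := kx C, lz := lx C\<rparr>"
definition dualS :: "sched \<Rightarrow> sched" where
  "dualS S = S\<lparr>prepT := prepT S \<circ> swc, measT := measT S \<circ> swc, cnT := cnT S \<circ> swc\<rparr>"

lemma dualC_simps[simp]: "nq (dualC C) = nq C" "mx (dualC C) = mz C" "mz (dualC C) = mx C"
  "hx (dualC C) = hz C" "hz (dualC C) = hx C" "kx (dualC C) = kz C" "kz (dualC C) = kx C"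
  "lx (dualC C) = lz C" "lz (dualC C) = lx C"
  by (simp_all add: dualC_def)

lemma dualS_simps[simp]: "per (dualS S) = per S" "prepT (dualS S) c = prepT S (swc c)"
  "measT (dualS S) c = measT S (swc c)" "cnT (dualS S) c = cnT S (swc c)"
  by (simp_all add: dualS_def)

lemma checks_dual: "c \<in> checks (dualC C) \<longleftrightarrow> swc c \<in> checks C"
  by (cases c) auto

lemma supp_dual: "supp (dualC C) c = supp C (swc c)"
  by (cases c) (auto simp: supp.simps)

lemma rl_Idle: "Idle u \<in> round_layer C S r t \<longleftrightarrow>
   (\<exists>c. u = Anc c \<and> c \<in> checks C \<and> t \<noteq> prepT S c \<and> t \<noteq> measT S c \<and> t \<notin> cnT S c ` supp C c) \<or>
   (\<exists>q. u = Data q \<and> q < nq C \<and> (\<forall>c\<in>checks C. q \<in> supp C c \<longrightarrow> cnT S c q \<noteq> t))"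
  unfolding round_layer_def by blast

lemma ex_swc: "(\<exists>c. P c) \<longleftrightarrow> (\<exists>c. P (swc c))" by (metis swc_swc)

lemma rl_dual: "p \<in> round_layer (dualC C) (dualS S) r t \<longleftrightarrow> swop p \<in> round_layer C S r t"
proof (cases p)
  case (PrepZ u) then show ?thesis by (cases u) (auto simp: rl_PrepZ rl_PrepX; case_tac x2; auto)+
next
  case (PrepX u) then show ?thesis by (cases u) (auto simp: rl_PrepZ rl_PrepX; case_tac x2; auto)+
next
  case (MeasZ u m) then show ?thesis by (cases u) (auto simp: rl_MeasZ rl_MeasX; case_tac x2; auto)+
next
  case (MeasX u m) then show ?thesis by (cases u) (auto simp: rl_MeasZ rl_MeasX; case_tac x2; auto)+
next
  case (CNOT a b) then show ?thesis
    by (cases a; cases b) (auto simp: rl_CNOT supp_dual; case_tac x2; auto)+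
next
  case (Idle u) then show ?thesis
  proof (cases u)
    case (Data q)
    have "(\<forall>c\<in>checks (dualC C). q \<in> supp (dualC C) c \<longrightarrow> cnT (dualS S) c q \<noteq> t) \<longleftrightarrow>
          (\<forall>c\<in>checks C. q \<in> supp C c \<longrightarrow> cnT S c q \<noteq> t)"
    proof
      assume h: "\<forall>c\<in>checks (dualC C). q \<in> supp (dualC C) c \<longrightarrow> cnT (dualS S) c q \<noteq> t"
      show "\<forall>c\<in>checks C. q \<in> supp C c \<longrightarrow> cnT S c q \<noteq> t"
      proof (intro ballI impI)
        fix c assume "c \<in> checks C" "q \<in> supp C c"
        then show "cnT S c q \<noteq> t" using h[rule_format, of "swc c"] by (simp add: checks_dual supp_dual)
      qed
    next
      assume h: "\<forall>c\<in>checks C. q \<in> supp C c \<longrightarrow> cnT S c q \<noteq> t"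
      show "\<forall>c\<in>checks (dualC C). q \<in> supp (dualC C) c \<longrightarrow> cnT (dualS S) c q \<noteq> t"
        using h by (simp add: checks_dual supp_dual)
    qed
    then show ?thesis using Idle Data by (simp add: rl_Idle)
  next
    case (Anc c)
    have "swc c \<in> checks C \<and> t \<noteq> prepT S (swc c) \<and> t \<noteq> measT S (swc c) \<and> t \<notin> cnT S (swc c) ` supp C (swc c)
      \<longleftrightarrow> swc c \<in> checks C \<and> t \<noteq> prepT S (swc c) \<and> t \<noteq> measT S (swc c) \<and> t \<notin> cnT S (swc c) ` supp C (swc c)" by simp
    then show ?thesis using Idle Anc by (simp add: rl_Idle checks_dual supp_dual)
  qed
qed

lemma anc_idle_dual: "p \<in> anc_idle (dualC C) \<longleftrightarrow> swop p \<in> anc_idle C"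
proof
  assume "p \<in> anc_idle (dualC C)"
  then obtain c where "p = Idle (Anc c)" "swc c \<in> checks C" by (auto simp: anc_idle_def checks_dual)
  then show "swop p \<in> anc_idle C" by (auto simp: anc_idle_def)
next
  assume "swop p \<in> anc_idle C"
  then obtain c where c: "swop p = Idle (Anc c)" "c \<in> checks C" by (auto simp: anc_idle_def)
  then have "p = Idle (Anc (swc c))" by (metis swop_swop swop.simps(6) swq.simps(2))
  then show "p \<in> anc_idle (dualC C)" using c by (auto simp: anc_idle_def checks_dual)
qed

lemma init_dual: "p \<in> {PrepX (Data q) | q. q < nq (dualC C)} \<longleftrightarrow> swop p \<in> {PrepZ (Data q) | q. q < nq C}"
proof
  assume "p \<in> {PrepX (Data q) | q. q < nq (dualC C)}" then show "swop p \<in> {PrepZ (Data q) | q. q < nq C}" by auto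
next
  assume "swop p \<in> {PrepZ (Data q) | q. q < nq C}"
  then obtain q where q: "swop p = PrepZ (Data q)" "q < nq C" by auto
  then have "p = PrepX (Data q)" by (metis swop_swop swop.simps(1) swq.simps(1))
  then show "p \<in> {PrepX (Data q) | q. q < nq (dualC C)}" using q by auto
qed

lemma fin_dual: "p \<in> {MeasX (Data q) (MData q) | q. q < nq (dualC C)} \<longleftrightarrow> swop p \<in> {MeasZ (Data q) (MData q) | q. q < nq C}"
proof
  assume "p \<in> {MeasX (Data q) (MData q) | q. q < nq (dualC C)}" then show "swop p \<in> {MeasZ (Data q) (MData q) | q. q < nq C}" by auto
next
  assume "swop p \<in> {MeasZ (Data q) (MData q) | q. q < nq C}"
  then obtain q where q: "swop p = MeasZ (Data q) (MData q)" "q < nq C" by auto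
  then have "p = MeasX (Data q) (MData q)" by (metis swop_swop swop.simps(4) swq.simps(1) swm.simps(2))
  then show "p \<in> {MeasX (Data q) (MData q) | q. q < nq (dualC C)}" using q by auto
qed

lemma ml_dual_mem: "p \<in> mem_layer (dualC C) (dualS S) BX R g \<longleftrightarrow> swop p \<in> mem_layer C S BZ R g"
  unfolding mem_layer_def using anc_idle_dual init_dual fin_dual rl_dual by simp

lemma ml_dual: "mem_layer (dualC C) (dualS S) BX R g = swop ` mem_layer C S BZ R g"
  using ml_dual_mem mem_swop by blast

lemma mem_len_dual: "mem_len (dualS S) R = mem_len S R" by (simp add: mem_len_def)

lemma reset_swop: "reset (swop ` L) u = reset L (swq u)"
  unfolding reset_def mem_swop by auto

lemma apply_swop: "layer_apply (swop ` L) (swf F) = swf (layer_apply L F)"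
proof -
  have s1: "{a. CNOT a u \<in> swop ` L \<and> fst (swf F) a} = swq ` {b. CNOT (swq u) b \<in> L \<and> snd F b}" for u
  proof (intro set_eqI iffI)
    fix a assume "a \<in> {a. CNOT a u \<in> swop ` L \<and> fst (swf F) a}"
    then show "a \<in> swq ` {b. CNOT (swq u) b \<in> L \<and> snd F b}"
      by (intro image_eqI[of _ _ "swq a"]) (auto simp: mem_swop swf_def)
  next
    fix a assume "a \<in> swq ` {b. CNOT (swq u) b \<in> L \<and> snd F b}"
    then show "a \<in> {a. CNOT a u \<in> swop ` L \<and> fst (swf F) a}" by (auto simp: mem_swop swf_def)
  qed
  have s2: "{b. CNOT u b \<in> swop ` L \<and> snd (swf F) b} = swq ` {a. CNOT a (swq u) \<in> L \<and> fst F a}" for u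
  proof (intro set_eqI iffI)
    fix b assume "b \<in> {b. CNOT u b \<in> swop ` L \<and> snd (swf F) b}"
    then show "b \<in> swq ` {a. CNOT a (swq u) \<in> L \<and> fst F a}"
      by (intro image_eqI[of _ _ "swq b"]) (auto simp: mem_swop swf_def)
  next
    fix b assume "b \<in> swq ` {a. CNOT a (swq u) \<in> L \<and> fst F a}"
    then show "b \<in> {b. CNOT u b \<in> swop ` L \<and> snd (swf F) b}" by (auto simp: mem_swop swf_def)
  qed
  show ?thesis
  proof (rule prod_eqI; rule ext)
    fix u
    show "fst (layer_apply (swop ` L) (swf F)) u = fst (swf (layer_apply L F)) u"
      unfolding fst_apply s1 par_image[OF inj_swq] reset_swop
      by (simp add: swf_def snd_apply)
    show "snd (layer_apply (swop ` L) (swf F)) u = snd (swf (layer_apply L F)) u"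
      unfolding snd_apply s2 par_image[OF inj_swq] reset_swop
      by (simp add: swf_def fst_apply)
  qed
qed

lemma flips_swop: "layer_flips (swop ` L) (swf F) (swm m) = layer_flips L F m"
proof -
  have s1: "{u. MeasZ u (swm m) \<in> swop ` L \<and> fst (swf F) u} = swq ` {v. MeasX v m \<in> L \<and> snd F v}"
  proof (intro set_eqI iffI)
    fix u assume "u \<in> {u. MeasZ u (swm m) \<in> swop ` L \<and> fst (swf F) u}"
    then show "u \<in> swq ` {v. MeasX v m \<in> L \<and> snd F v}"
      by (intro image_eqI[of _ _ "swq u"]) (auto simp: mem_swop swf_def)
  next
    fix u assume "u \<in> swq ` {v. MeasX v m \<in> L \<and> snd F v}"
    then show "u \<in> {u. MeasZ u (swm m) \<in> swop ` L \<and> fst (swf F) u}" by (auto simp: mem_swop swf_def)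
  qed
  have s2: "{u. MeasX u (swm m) \<in> swop ` L \<and> snd (swf F) u} = swq ` {v. MeasZ v m \<in> L \<and> fst F v}"
  proof (intro set_eqI iffI)
    fix u assume "u \<in> {u. MeasX u (swm m) \<in> swop ` L \<and> snd (swf F) u}"
    then show "u \<in> swq ` {v. MeasZ v m \<in> L \<and> fst F v}"
      by (intro image_eqI[of _ _ "swq u"]) (auto simp: mem_swop swf_def)
  next
    fix u assume "u \<in> swq ` {v. MeasZ v m \<in> L \<and> fst F v}"
    then show "u \<in> {u. MeasX u (swm m) \<in> swop ` L \<and> snd (swf F) u}" by (auto simp: mem_swop swf_def)
  qed
  show ?thesis unfolding flips_par s1 s2 par_image[OF inj_swq] by auto
qed

lemma prop_swop: "Ls' = (\<lambda>g. swop ` Ls g) \<Longrightarrow> propagate Ls' g n (swf F) (swm m) = propagate Ls g n F m"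
proof (induction n arbitrary: g F)
  case 0 then show ?case by simp
next
  case (Suc n)
  show ?case using Suc.IH[OF Suc.prems] Suc.prems flips_swop apply_swop by simp
qed

lemma swe_eq_iff: "swe a = b \<longleftrightarrow> a = swe b" by (metis swe_swe)

lemma img_eq_single[simp]: "swq ` X = {swq u} \<longleftrightarrow> X = {u}"
  by (metis image_empty image_insert swq_img_img)
lemma img_sub_single: "swq ` Z \<subseteq> {swq u} \<longleftrightarrow> Z \<subseteq> {u}" by auto
lemma img_sub_pair: "swq ` Z \<subseteq> {swq a, swq b} \<longleftrightarrow> Z \<subseteq> {a, b}" by auto

lemma fault_ok_swop: "fault_ok (swop p) (swe e) = fault_ok p e"
proof (cases p)
  case (PrepZ u) then show ?thesis by (cases e) (auto simp: swe_eq_iff)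
next
  case (PrepX u) then show ?thesis by (cases e) (auto simp: swe_eq_iff)
next
  case (MeasZ u m) then show ?thesis by (cases e) auto
next
  case (MeasX u m) then show ?thesis by (cases e) auto
next
  case (CNOT a b)
  show ?thesis
  proof (cases e)
    case (PauliF X Z)
    have "swq ` Z \<subseteq> {swq b, swq a} \<longleftrightarrow> Z \<subseteq> {a, b}" using img_sub_pair[of Z b a] by auto
    moreover have "swq ` X \<subseteq> {swq b, swq a} \<longleftrightarrow> X \<subseteq> {a, b}" using img_sub_pair[of X b a] by auto
    ultimately show ?thesis using CNOT PauliF by auto
  next
    case FlipF then show ?thesis using CNOT by simp
  qed
next
  case (Idle u)
  show ?thesis
  proof (cases e)
    case (PauliF X Z)
    show ?thesis using Idle PauliF img_sub_single[of Z u] img_sub_single[of X u] by auto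
  next
    case FlipF then show ?thesis using Idle by simp
  qed
qed

lemma meas_label_swop: "meas_label (swop p) = map_option swm (meas_label p)"
  by (cases p) auto

lemma frame_swf: "((\<lambda>u. u \<in> swq ` Z), (\<lambda>u. u \<in> swq ` X)) = swf ((\<lambda>u. u \<in> X), (\<lambda>u. u \<in> Z))"
proof -
  have "u \<in> swq ` A \<longleftrightarrow> swq u \<in> A" for u A by (metis image_iff swq_swq)
  then show ?thesis by (auto simp: swf_def)
qed

lemma eff_swop: assumes "Ls' = (\<lambda>g. swop ` Ls g)"
  shows "mech_effect Ls' N (swmech f) (swm m) = mech_effect Ls N f m"
proof -
  obtain g p e where f: "f = (g, p, e)" by (cases f)
  show ?thesis
  proof (cases e)
    case (PauliF X Z)
    have "mech_effect Ls' N (swmech f) (swm m) =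
      propagate Ls' (Suc g) (N - Suc g) (swf ((\<lambda>u. u \<in> X), (\<lambda>u. u \<in> Z))) (swm m)"
      unfolding f PauliF swmech_def frame_swf[symmetric] by simp
    also have "\<dots> = mech_effect Ls N f m" unfolding f PauliF using prop_swop[OF assms] by simp
    finally show ?thesis .
  next
    case FlipF
    have "(map_option swm (meas_label p) = Some (swm m)) = (meas_label p = Some m)"
      by (cases "meas_label p") auto
    then show ?thesis unfolding f FlipF swmech_def by (simp add: meas_label_swop)
  qed
qed

lemma mechs_swop: assumes "Ls' = (\<lambda>g. swop ` Ls g)"
  shows "f \<in> mechs Ls' N \<longleftrightarrow> swmech f \<in> mechs Ls N"
proof -
  obtain g p e where f: "f = (g, p, e)" by (cases f)
  show ?thesis unfolding f mechs_def swmech_def assms using mem_swop fault_ok_swop by simp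
qed

lemma cd_set_swop: assumes L: "Ls' = (\<lambda>g. swop ` Ls g)"
  and D: "Ds' = (\<lambda>D. swm ` D) ` Ds" and Ob: "Obs' = (\<lambda>B. swm ` B) ` Obs"
  and F: "finite F" "F \<subseteq> mechs Ls N" "inj_on (\<lambda>(g, p, e). (g, p)) F"
     "\<forall>D \<in> Ds. even (card {m \<in> D. total_flips Ls N F m})"
     "\<exists>Ob \<in> Obs. odd (card {m \<in> Ob. total_flips Ls N F m})"
  shows "finite (swmech ` F) \<and> swmech ` F \<subseteq> mechs Ls' N \<and> inj_on (\<lambda>(g, p, e). (g, p)) (swmech ` F) \<and>
     (\<forall>D \<in> Ds'. even (card {m \<in> D. total_flips Ls' N (swmech ` F) m})) \<and>
     (\<exists>Ob \<in> Obs'. odd (card {m \<in> Ob. total_flips Ls' N (swmech ` F) m}))"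
proof -
  have TT: "total_flips Ls' N (swmech ` F) (swm m) = total_flips Ls N F m" for m
  proof -
    have "{f' \<in> swmech ` F. mech_effect Ls' N f' (swm m)} = swmech ` {f \<in> F. mech_effect Ls N f m}"
      using eff_swop[OF L] by auto
    then show ?thesis unfolding total_flips_def by (simp add: card_image[OF inj_swmech])
  qed
  have cnt: "card {m \<in> swm ` A. total_flips Ls' N (swmech ` F) m} = card {m \<in> A. total_flips Ls N F m}" for A
  proof -
    have "{m \<in> swm ` A. total_flips Ls' N (swmech ` F) m} = swm ` {m \<in> A. total_flips Ls N F m}"
      using TT by force
    then show ?thesis by (simp add: card_image[OF inj_swm])
  qed
  have m1: "swmech ` F \<subseteq> mechs Ls' N"
  proof
    fix x assume "x \<in> swmech ` F"
    then obtain f where f: "x = swmech f" "f \<in> F" by blast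
    then have "swmech x \<in> mechs Ls N" using F(2) by auto
    then show "x \<in> mechs Ls' N" using mechs_swop[OF L, of x] by blast
  qed
  have m2: "inj_on (\<lambda>(g, p, e). (g, p)) (swmech ` F)"
  proof (rule inj_onI)
    fix x y assume "x \<in> swmech ` F" "y \<in> swmech ` F" and e: "(\<lambda>(g, p, e). (g, p)) x = (\<lambda>(g, p, e). (g, p)) y"
    then obtain fx fy where xy: "x = swmech fx" "y = swmech fy" "fx \<in> F" "fy \<in> F" by auto
    obtain g1 p1 e1 where fx: "fx = (g1, p1, e1)" by (cases fx)
    obtain g2 p2 e2 where fy: "fy = (g2, p2, e2)" by (cases fy)
    have "(\<lambda>(g, p, e). (g, p)) fx = (\<lambda>(g, p, e). (g, p)) fy" using e xy fx fy by (simp add: swmech_def)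
    then have "fx = fy" using F(3) xy by (meson inj_onD)
    then show "x = y" using xy by simp
  qed
  show ?thesis using F m1 m2 D Ob cnt by auto
qed

lemma cd_swop: assumes L: "Ls' = (\<lambda>g. swop ` Ls g)"
  and D: "Ds' = (\<lambda>D. swm ` D) ` Ds" and Ob: "Obs' = (\<lambda>B. swm ` B) ` Obs"
  shows "circuit_distance Ls' N Ds' Obs' = circuit_distance Ls N Ds Obs"
proof -
  have L': "Ls = (\<lambda>g. swop ` Ls' g)" using L by (simp add: image_image)
  have D': "Ds = (\<lambda>D. swm ` D) ` Ds'" using D by (simp add: image_image)
  have Ob': "Obs = (\<lambda>B. swm ` B) ` Obs'" using Ob by (simp add: image_image)
  let ?S = "\<lambda>Ls Ds Obs. {F. finite F \<and> F \<subseteq> mechs Ls N \<and> inj_on (\<lambda>(g, p, e). (g, p)) F \<and>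
           (\<forall>D \<in> Ds. even (card {m \<in> D. total_flips Ls N F m})) \<and>
           (\<exists>Ob \<in> Obs. odd (card {m \<in> Ob. total_flips Ls N F m}))}"
  have a: "swmech ` F \<in> ?S Ls' Ds' Obs'" if "F \<in> ?S Ls Ds Obs" for F
  proof -
    have h: "finite F" "F \<subseteq> mechs Ls N" "inj_on (\<lambda>(g, p, e). (g, p)) F"
     "\<forall>D \<in> Ds. even (card {m \<in> D. total_flips Ls N F m})"
     "\<exists>Ob \<in> Obs. odd (card {m \<in> Ob. total_flips Ls N F m})" using that by auto
    show ?thesis using cd_set_swop[OF L D Ob h] by auto
  qed
  have b: "swmech ` F \<in> ?S Ls Ds Obs" if "F \<in> ?S Ls' Ds' Obs'" for F
  proof -
    have h: "finite F" "F \<subseteq> mechs Ls' N" "inj_on (\<lambda>(g, p, e). (g, p)) F"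
     "\<forall>D \<in> Ds'. even (card {m \<in> D. total_flips Ls' N F m})"
     "\<exists>Ob \<in> Obs'. odd (card {m \<in> Ob. total_flips Ls' N F m})" using that by auto
    show ?thesis using cd_set_swop[OF L' D' Ob' h] by auto
  qed
  have "(\<lambda>F. enat (card F)) ` ?S Ls' Ds' Obs' = (\<lambda>F. enat (card F)) ` ?S Ls Ds Obs"
  proof (intro set_eqI iffI)
    fix y assume "y \<in> (\<lambda>F. enat (card F)) ` ?S Ls' Ds' Obs'"
    then obtain F where F: "F \<in> ?S Ls' Ds' Obs'" "y = enat (card F)" by blast
    then show "y \<in> (\<lambda>F. enat (card F)) ` ?S Ls Ds Obs"
      using b[OF F(1)] by (intro image_eqI[of _ _ "swmech ` F"]) (auto simp: card_image[OF inj_swmech])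
  next
    fix y assume "y \<in> (\<lambda>F. enat (card F)) ` ?S Ls Ds Obs"
    then obtain F where F: "F \<in> ?S Ls Ds Obs" "y = enat (card F)" by blast
    then show "y \<in> (\<lambda>F. enat (card F)) ` ?S Ls' Ds' Obs'"
      using a[OF F(1)] by (intro image_eqI[of _ _ "swmech ` F"]) (auto simp: card_image[OF inj_swmech])
  qed
  then show ?thesis unfolding circuit_distance_def by simp
qed

lemma det_dual: "detectors (dualC C) BX R = (\<lambda>D. swm ` D) ` detectors C BZ R"
proof (intro set_eqI iffI)
  fix D assume "D \<in> detectors (dualC C) BX R"
  then consider (a) i where "i < mz C" "D = {MAnc 0 (XC i)}"
    | (b) r c where "1 \<le> r" "r < R" "swc c \<in> checks C" "D = {MAnc (r - 1) c, MAnc r c}"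
    | (c) i where "i < mz C" "D = insert (MAnc (R - 1) (XC i)) (MData ` supp C (ZC i))"
    unfolding detectors_def by (auto simp: checks_dual supp_dual)
  then show "D \<in> (\<lambda>D. swm ` D) ` detectors C BZ R"
  proof cases
    case a
    have "{MAnc 0 (ZC i)} \<in> detectors C BZ R" using a unfolding detectors_def by auto
    then show ?thesis using a by (intro image_eqI[of _ _ "{MAnc 0 (ZC i)}"]) auto
  next
    case b
    have "{MAnc (r - 1) (swc c), MAnc r (swc c)} \<in> detectors C BZ R" using b unfolding detectors_def by blast
    then show ?thesis using b by (intro image_eqI[of _ _ "{MAnc (r - 1) (swc c), MAnc r (swc c)}"]) auto
  next
    case c
    have "insert (MAnc (R - 1) (ZC i)) (MData ` supp C (ZC i)) \<in> detectors C BZ R"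
      using c unfolding detectors_def by auto
    then show ?thesis using c
      by (intro image_eqI[of _ _ "insert (MAnc (R - 1) (ZC i)) (MData ` supp C (ZC i))"]) (auto simp: image_image)
  qed
next
  fix D assume "D \<in> (\<lambda>D. swm ` D) ` detectors C BZ R"
  then obtain D0 where D: "D = swm ` D0" "D0 \<in> detectors C BZ R" by blast
  from D(2) consider (a) i where "i < mz C" "D0 = {MAnc 0 (ZC i)}"
    | (b) r c where "1 \<le> r" "r < R" "c \<in> checks C" "D0 = {MAnc (r - 1) c, MAnc r c}"
    | (c) i where "i < mz C" "D0 = insert (MAnc (R - 1) (ZC i)) (MData ` supp C (ZC i))"
    unfolding detectors_def by auto
  then show "D \<in> detectors (dualC C) BX R"
  proof cases
    case a then show ?thesis using D unfolding detectors_def by auto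
  next
    case b
    have "swc c \<in> checks (dualC C)" using b by (simp add: checks_dual)
    then show ?thesis using D b unfolding detectors_def by auto
  next
    case c
    have "D = insert (MAnc (R - 1) (XC i)) (MData ` supp (dualC C) (XC i))"
      using D c by (auto simp: supp_dual image_image)
    then show ?thesis using c unfolding detectors_def by auto
  qed
qed

lemma obs_dual: "observables (dualC C) BX = (\<lambda>B. swm ` B) ` observables C BZ"
proof -
  have e: "swm ` B = B" if "B \<in> observables C BZ" for B
  proof -
    from that obtain l where "B = MData ` {q. q < nq C \<and> lz C l q}" by auto
    then show ?thesis by (auto simp: image_image)
  qed
  have "(\<lambda>B. swm ` B) ` observables C BZ = (\<lambda>B. B) ` observables C BZ"
    by (rule image_cong[OF refl e])
  then show ?thesis by simp
qed

lemma circ_BZ_dual: "circ_dist_basis C S R BZ = circ_dist_basis (dualC C) (dualS S) R BX"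
  unfolding circ_dist_basis_def mem_len_dual
  apply (rule cd_swop[symmetric])
    apply (rule ext, rule ml_dual)
   apply (rule det_dual)
  apply (rule obs_dual)
  done

lemma ext_le: assumes h: "inj_on h Rs"
  shows "ext_dist n H m L k E (h ` Rs) \<le> ext_dist n H m L k (E \<circ> h) Rs"
proof -
  let ?g = "map_sum id h"
  have injg: "inj_on ?g (Inl ` {..<n} \<union> Inr ` Rs)"
  proof (rule inj_onI)
    fix x y assume x: "x \<in> Inl ` {..<n} \<union> Inr ` Rs" and y: "y \<in> Inl ` {..<n} \<union> Inr ` Rs" and e: "?g x = ?g y"
    show "x = y"
    proof (cases x)
      case (Inl a) then show ?thesis using e by (cases y) auto
    next
      case (Inr a)
      show ?thesis
      proof (cases y)
        case (Inl b) then show ?thesis using e Inr by simp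
      next
        case (Inr b)
        have "a \<in> Rs" "b \<in> Rs" using x y \<open>x = Inr a\<close> Inr by auto
        moreover have "h a = h b" using e \<open>x = Inr a\<close> Inr by simp
        ultimately show ?thesis using h \<open>x = Inr a\<close> Inr by (simp add: inj_on_def)
      qed
    qed
  qed
  have ec: "ext_col H E i (?g c) = ext_col H (E \<circ> h) i c" for H i c by (cases c) auto
  let ?S1 = "{X. finite X \<and> X \<subseteq> Inl ` {..<n} \<union> Inr ` (h ` Rs) \<and>
           (\<forall>i<m. even (card {c \<in> X. ext_col H E i c})) \<and> (\<exists>l<k. odd (card {c \<in> X. ext_col L E l c}))}"
  let ?S2 = "{X. finite X \<and> X \<subseteq> Inl ` {..<n} \<union> Inr ` Rs \<and>
           (\<forall>i<m. even (card {c \<in> X. ext_col H (E \<circ> h) i c})) \<and> (\<exists>l<k. odd (card {c \<in> X. ext_col L (E \<circ> h) l c}))}"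
  have cnt: "card {c \<in> ?g ` X. ext_col M E i c} = card {c \<in> X. ext_col M (E \<circ> h) i c}"
    if "X \<subseteq> Inl ` {..<n} \<union> Inr ` Rs" for X M i
  proof -
    have "{c \<in> ?g ` X. ext_col M E i c} = ?g ` {c \<in> X. ext_col M (E \<circ> h) i c}"
    proof (intro set_eqI iffI)
      fix y assume "y \<in> {c \<in> ?g ` X. ext_col M E i c}"
      then obtain c where c: "c \<in> X" "y = ?g c" "ext_col M E i (?g c)" by blast
      then have "ext_col M (E \<circ> h) i c" using ec[of M i c] by simp
      then show "y \<in> ?g ` {c \<in> X. ext_col M (E \<circ> h) i c}" using c by blast
    next
      fix y assume "y \<in> ?g ` {c \<in> X. ext_col M (E \<circ> h) i c}"
      then obtain c where c: "c \<in> X" "y = ?g c" "ext_col M (E \<circ> h) i c" by blast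
      then have "ext_col M E i (?g c)" using ec[of M i c] by simp
      then show "y \<in> {c \<in> ?g ` X. ext_col M E i c}" using c by blast
    qed
    moreover have "{c \<in> X. ext_col M (E \<circ> h) i c} \<subseteq> X" by (rule Collect_restrict)
    then have "{c \<in> X. ext_col M (E \<circ> h) i c} \<subseteq> Inl ` {..<n} \<union> Inr ` Rs" using that by (rule subset_trans)
    then have "inj_on ?g {c \<in> X. ext_col M (E \<circ> h) i c}" by (rule inj_on_subset[OF injg])
    ultimately show ?thesis by (simp add: card_image)
  qed
  have img: "?g ` (Inl ` {..<n} \<union> Inr ` Rs) = Inl ` {..<n} \<union> Inr ` (h ` Rs)"
    by (simp add: image_Un image_image)
  show ?thesis unfolding ext_dist_def
  proof (rule Inf_greatest)
    fix y assume "y \<in> (\<lambda>X. enat (card X)) ` ?S2"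
    then obtain X where X: "X \<in> ?S2" "y = enat (card X)" by blast
    have Xs: "X \<subseteq> Inl ` {..<n} \<union> Inr ` Rs" using X by simp
    have cX: "card (?g ` X) = card X" using card_image[OF inj_on_subset[OF injg Xs]] .
    have "?g ` X \<subseteq> ?g ` (Inl ` {..<n} \<union> Inr ` Rs)" using Xs by (rule image_mono)
    then have s1: "?g ` X \<subseteq> Inl ` {..<n} \<union> Inr ` (h ` Rs)" unfolding img .
    have c1: "\<forall>i<m. even (card {c \<in> ?g ` X. ext_col H E i c})" using X(1) cnt[OF Xs] by simp
    have c2: "\<exists>l<k. odd (card {c \<in> ?g ` X. ext_col L E l c})" using X(1) cnt[OF Xs] by simp
    have "?g ` X \<in> ?S1" using s1 c1 c2 X(1) by blast
    then have "Inf ((\<lambda>X. enat (card X)) ` ?S1) \<le> enat (card (?g ` X))" by (intro Inf_lower imageI)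
    then show "Inf ((\<lambda>X. enat (card X)) ` ?S1) \<le> y" using X(2) cX by simp
  qed
qed

definition swr :: "chk \<times> nat \<Rightarrow> chk \<times> nat" where "swr rr = (swc (fst rr), snd rr)"

lemma resid_set_dual: "resid_set (dualC C) (dualS S) \<circ> swr = resid_set C S"
  by (intro ext) (auto simp: resid_set_def swr_def supp_dual)

lemma resid_idx_dual: "resid_idx (dualC C) (dualS S) False = swr ` resid_idx C S True"
proof (intro set_eqI iffI)
  fix x assume "x \<in> resid_idx (dualC C) (dualS S) False"
  then obtain c q where x: "x = (c, q)" "swc c \<in> checks C" "\<not> isX c" "q \<in> supp C (swc c)"
    "\<exists>q' \<in> supp C (swc c). cnT S (swc c) q' < cnT S (swc c) q"
    by (auto simp: resid_idx_def checks_dual supp_dual)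
  then have "(swc c, q) \<in> resid_idx C S True" by (auto simp: resid_idx_def)
  then show "x \<in> swr ` resid_idx C S True" using x by (intro image_eqI[of _ _ "(swc c, q)"]) (auto simp: swr_def)
next
  fix x assume "x \<in> swr ` resid_idx C S True"
  then obtain rr where rr: "x = swr rr" "rr \<in> resid_idx C S True" by blast
  obtain c q where cq: "rr = (c, q)" by (cases rr)
  have x: "x = (swc c, q)" "c \<in> checks C" "isX c" "q \<in> supp C c"
    "\<exists>q' \<in> supp C c. cnT S c q' < cnT S c q"
    using rr cq by (auto simp: resid_idx_def swr_def)
  then show "x \<in> resid_idx (dualC C) (dualS S) False" by (auto simp: resid_idx_def checks_dual supp_dual)
qed

lemma swr_swr[simp]: "swr (swr x) = x" by (simp add: swr_def)

lemma ext_reindex_swr: "ext_dist n H m L k E (swr ` Rs) = ext_dist n H m L k (E \<circ> swr) Rs"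
proof (rule antisym)
  have inj: "inj_on swr A" for A by (metis inj_onI swr_swr)
  show "ext_dist n H m L k E (swr ` Rs) \<le> ext_dist n H m L k (E \<circ> swr) Rs" by (rule ext_le[OF inj])
  have "ext_dist n H m L k (E \<circ> swr) (swr ` swr ` Rs) \<le> ext_dist n H m L k (E \<circ> swr \<circ> swr) (swr ` Rs)"
    by (rule ext_le[OF inj])
  moreover have "swr ` swr ` Rs = Rs" by (simp add: image_image)
  moreover have "E \<circ> swr \<circ> swr = E" by (simp add: comp_def)
  ultimately show "ext_dist n H m L k (E \<circ> swr) Rs \<le> ext_dist n H m L k E (swr ` Rs)" by simp
qed

lemma ext_X_dual: "ext_dist_Z (dualC C) (dualS S) (resid_idx (dualC C) (dualS S) False) = ext_dist_X C S (resid_idx C S True)"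
proof -
  show ?thesis unfolding ext_dist_Z_def ext_dist_X_def resid_idx_dual ext_reindex_swr resid_set_dual
    by simp
qed

lemma valid_dual: assumes v: "valid_sec C S" shows "valid_sec (dualC C) (dualS S)"
proof -
  have v1: "\<forall>c \<in> checks C. prepT S c < measT S c \<and> measT S c < per S \<and>
        (\<forall>q \<in> supp C c. prepT S c < cnT S c q \<and> cnT S c q < measT S c) \<and>
        inj_on (cnT S c) (supp C c)" using v by (simp add: valid_sec_def)
  have v2: "\<forall>q c1 c2. c1 \<in> checks C \<longrightarrow> c2 \<in> checks C \<longrightarrow> c1 \<noteq> c2 \<longrightarrow>
        q \<in> supp C c1 \<longrightarrow> q \<in> supp C c2 \<longrightarrow> cnT S c1 q \<noteq> cnT S c2 q" using v by (simp add: valid_sec_def)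
  have w1: "\<forall>c \<in> checks (dualC C). prepT (dualS S) c < measT (dualS S) c \<and> measT (dualS S) c < per (dualS S) \<and>
        (\<forall>q \<in> supp (dualC C) c. prepT (dualS S) c < cnT (dualS S) c q \<and> cnT (dualS S) c q < measT (dualS S) c) \<and>
        inj_on (cnT (dualS S) c) (supp (dualC C) c)"
  proof
    fix c assume "c \<in> checks (dualC C)"
    then have c: "swc c \<in> checks C" by (simp add: checks_dual)
    have inj: "inj_on (cnT S (swc c)) (supp C (swc c))" using v1 c by blast
    have "inj_on (cnT (dualS S) c) (supp (dualC C) c)"
      using inj by (simp add: supp_dual)
    then show "prepT (dualS S) c < measT (dualS S) c \<and> measT (dualS S) c < per (dualS S) \<and>
        (\<forall>q \<in> supp (dualC C) c. prepT (dualS S) c < cnT (dualS S) c q \<and> cnT (dualS S) c q < measT (dualS S) c) \<and>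
        inj_on (cnT (dualS S) c) (supp (dualC C) c)" using v1 c by (simp add: supp_dual)
  qed
  have w2: "\<forall>q c1 c2. c1 \<in> checks (dualC C) \<longrightarrow> c2 \<in> checks (dualC C) \<longrightarrow> c1 \<noteq> c2 \<longrightarrow>
        q \<in> supp (dualC C) c1 \<longrightarrow> q \<in> supp (dualC C) c2 \<longrightarrow> cnT (dualS S) c1 q \<noteq> cnT (dualS S) c2 q"
  proof (intro allI impI)
    fix q c1 c2 assume h: "c1 \<in> checks (dualC C)" "c2 \<in> checks (dualC C)" "c1 \<noteq> c2"
      "q \<in> supp (dualC C) c1" "q \<in> supp (dualC C) c2"
    then show "cnT (dualS S) c1 q \<noteq> cnT (dualS S) c2 q"
      using v2[rule_format, of "swc c1" "swc c2" q] by (simp add: checks_dual supp_dual swc_inj)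
  qed
  show ?thesis unfolding valid_sec_def using w1 w2 by blast
qed

lemma ni_dual: assumes "non_interleaved C S" shows "non_interleaved (dualC C) (dualS S)"
proof -
  have e: "supp (dualC C) (XC i) = supp C (ZC i)" "supp (dualC C) (ZC i) = supp C (XC i)" for i
    by (simp_all add: supp_dual)
  from assms[unfolded non_interleaved_def] show ?thesis
  proof
    assume h: "\<forall>i<mx C. \<forall>k<mz C. \<forall>q \<in> supp C (XC i) \<inter> supp C (ZC k). cnT S (XC i) q < cnT S (ZC k) q"
    have "\<forall>i<mx (dualC C). \<forall>k<mz (dualC C). \<forall>q \<in> supp (dualC C) (XC i) \<inter> supp (dualC C) (ZC k).
         cnT (dualS S) (ZC k) q < cnT (dualS S) (XC i) q"
    proof (intro allI impI ballI)
      fix i k q assume "i < mx (dualC C)" "k < mz (dualC C)" "q \<in> supp (dualC C) (XC i) \<inter> supp (dualC C) (ZC k)"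
      then show "cnT (dualS S) (ZC k) q < cnT (dualS S) (XC i) q" using h[rule_format, of k i q] by (simp add: e)
    qed
    then show ?thesis unfolding non_interleaved_def by blast
  next
    assume h: "\<forall>i<mx C. \<forall>k<mz C. \<forall>q \<in> supp C (XC i) \<inter> supp C (ZC k). cnT S (ZC k) q < cnT S (XC i) q"
    have "\<forall>i<mx (dualC C). \<forall>k<mz (dualC C). \<forall>q \<in> supp (dualC C) (XC i) \<inter> supp (dualC C) (ZC k).
         cnT (dualS S) (XC i) q < cnT (dualS S) (ZC k) q"
    proof (intro allI impI ballI)
      fix i k q assume "i < mx (dualC C)" "k < mz (dualC C)" "q \<in> supp (dualC C) (XC i) \<inter> supp (dualC C) (ZC k)"
      then show "cnT (dualS S) (XC i) q < cnT (dualS S) (ZC k) q" using h[rule_format, of k i q] by (simp add: e)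
    qed
    then show ?thesis unfolding non_interleaved_def by blast
  qed
qed

lemma css_dual: assumes "css_with_logicals C" shows "css_with_logicals (dualC C)"
proof -
  have "css_code (dualC C)"
    unfolding css_code_def
  proof (intro allI impI)
    fix i k assume "i < mx (dualC C)" "k < mz (dualC C)"
    then have "even (card {q. q < nq C \<and> hx C k q \<and> hz C i q})"
      using assms by (simp add: css_with_logicals_def css_code_def)
    moreover have "{q. q < nq C \<and> hx C k q \<and> hz C i q} = {q. q < nq (dualC C) \<and> hx (dualC C) i q \<and> hz (dualC C) k q}"
      by auto
    ultimately show "even (card {q. q < nq (dualC C) \<and> hx (dualC C) i q \<and> hz (dualC C) k q})" by simp
  qed
  then show ?thesis using assms by (simp add: css_with_logicals_def)
qed

theorem corollary1:
  fixes C :: css and S :: sched and R :: nat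
  assumes "css_with_logicals C"
    and "valid_sec C S"
    and "non_interleaved C S"
    and "1 \<le> R"
  shows "(\<forall>RX RZ. RX \<subseteq> resid_idx C S True \<longrightarrow> RZ \<subseteq> resid_idx C S False \<longrightarrow>
            circ_dist C S R \<le> d_ext C S RX RZ) \<and>
         circ_dist C S R = d_ext C S (resid_idx C S True) (resid_idx C S False)"
proof -
  have m1: "memc C S R" using assms by (simp add: memc_def memc_axioms_def memx_def)
  have m2: "memc (dualC C) (dualS S) R"
    using assms valid_dual css_dual by (simp add: memc_def memc_axioms_def memx_def)
  have bx: "circ_dist_basis C S R BX = ext_dist_Z C S (resid_idx C S False)"
    using memc.BX_eq[OF m1 assms(3)] .
  have "circ_dist_basis C S R BZ = circ_dist_basis (dualC C) (dualS S) R BX" by (rule circ_BZ_dual)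
  also have "\<dots> = ext_dist_Z (dualC C) (dualS S) (resid_idx (dualC C) (dualS S) False)"
    using memc.BX_eq[OF m2 ni_dual[OF assms(3)]] .
  also have "\<dots> = ext_dist_X C S (resid_idx C S True)" by (rule ext_X_dual)
  finally have bz: "circ_dist_basis C S R BZ = ext_dist_X C S (resid_idx C S True)" .
  have eq: "circ_dist C S R = d_ext C S (resid_idx C S True) (resid_idx C S False)"
    unfolding circ_dist_def d_ext_def bx bz by (simp add: min.commute)
  have le: "circ_dist C S R \<le> d_ext C S RX RZ"
    if "RX \<subseteq> resid_idx C S True" "RZ \<subseteq> resid_idx C S False" for RX RZ
  proof -
    have "ext_dist_X C S (resid_idx C S True) \<le> ext_dist_X C S RX"
      unfolding ext_dist_X_def by (rule ext_mono[OF that(1)])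
    moreover have "ext_dist_Z C S (resid_idx C S False) \<le> ext_dist_Z C S RZ"
      unfolding ext_dist_Z_def by (rule ext_mono[OF that(2)])
    ultimately show ?thesis unfolding eq d_ext_def by (meson min.mono)
  qed
  show ?thesis using eq le by blast
qed

end
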